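(* For every real $\beta$: there is a function $a(t)\ge0$ with $a(t)\to0$ as $|t|\to\infty$ such that the spectrum of $M(t)=(d(t)+d(t)^* )^2$ is contained in $[0,a(t)]$; $d(t)\to0$ as $|t|\to\infty$; and as $t\to+\infty$ (and likewise as $t\to-\infty$) $b(t)$ converges to an operator $b_\infty$ satisfying $b_\infty^2=L$. All convergences are in operator norm.
   Context: Let $G$ be a finite simple graph. For $k\ge0$ let $\Omega_k$ be the space of complex-valued functions on the (oriented) $k$-simplices of $G$ (complete subgraphs with $k+1$ vertices), $\Omega=\bigoplus_k\Omega_k$. The exterior derivative $d_0:\Omega_k\to\Omega_{k+1}$ is $(d_0f)(x_0,\dots,x_{k+1})=\sum_{j}(-1)^jf(x_0,\dots,\hat x_j,\dots,x_{k+1})$, $D_0=d_0+d_0^*$, $L=D_0^2$. For a self-adjoint operator $D$ on $\Omega$ whose blocks $\Omega_k\to\Omega_j$ vanish unless $|j-k|\le1$, write $D=d+d^*+b$ with $d$ the blocks $\Omega_k\to\Omega_{k+1}$ and $b$ the block-diagonal part. The Dirac deformation with real parameter $\beta$ is the solution $D(t)$ of $D'=BD-DB$, $D(0)=D_0$, with $B(t)=d(t)-d(t)^*+i\beta b(t)$, $D(t)=d(t)+d(t)^*+b(t)$ (the solution exists for all real $t$ and keeps this form). *)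

theory Defs
  imports "HOL-Analysis.Analysis"
begin

text \<open>Operators on Omega are represented as matrices indexed by simplices
  (nonempty cliques, as vertex sets); only entries indexed by simplices matter.
  Orientation of a simplex: the increasing order of its vertices w.r.t. the
  linear order on the vertex type.\<close>

type_synonym 'v op = "'v set \<Rightarrow> 'v set \<Rightarrow> complex"

definition is_clique :: "'v set \<Rightarrow> ('v \<Rightarrow> 'v \<Rightarrow> bool) \<Rightarrow> 'v set \<Rightarrow> bool" where
  "is_clique V E x \<longleftrightarrow> x \<subseteq> V \<and> (\<forall>u\<in>x. \<forall>w\<in>x. u \<noteq> w \<longrightarrow> E u w)"

definition simplices :: "'v set \<Rightarrow> ('v \<Rightarrow> 'v \<Rightarrow> bool) \<Rightarrow> 'v set set" where
  "simplices V E = {x. x \<noteq> {} \<and> is_clique V E x}"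

definition mmul :: "'v set set \<Rightarrow> 'v op \<Rightarrow> 'v op \<Rightarrow> 'v op" where
  "mmul S A C = (\<lambda>y x. \<Sum>z\<in>S. A y z * C z x)"

definition madd :: "'v op \<Rightarrow> 'v op \<Rightarrow> 'v op" where
  "madd A C = (\<lambda>y x. A y x + C y x)"

definition msub :: "'v op \<Rightarrow> 'v op \<Rightarrow> 'v op" where
  "msub A C = (\<lambda>y x. A y x - C y x)"

definition adj :: "'v op \<Rightarrow> 'v op" where
  "adj A = (\<lambda>y x. cnj (A x y))"

text \<open>Exterior derivative d0: (d0 f)(y) = sum_j (-1)^j f(y without y_j),
  where y_0 < y_1 < ... are the vertices of y in increasing order.\<close>
definition d0 :: "'v::linorder set set \<Rightarrow> 'v op" where
  "d0 S = (\<lambda>y x. if y \<in> S \<and> x \<in> S \<and> x \<subseteq> y \<and> card y = card x + 1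
      then (-1) ^ card {v\<in>y. v < (THE w. w \<in> y - x)} else 0)"

definition Dirac0 :: "'v::linorder set set \<Rightarrow> 'v op" where
  "Dirac0 S = madd (d0 S) (adj (d0 S))"

definition Laplacian :: "'v::linorder set set \<Rightarrow> 'v op" where
  "Laplacian S = mmul S (Dirac0 S) (Dirac0 S)"

text \<open>Blocks Omega_k -> Omega_(k+1) (a k-simplex has k+1 vertices).\<close>
definition dpart :: "'v op \<Rightarrow> 'v op" where
  "dpart A = (\<lambda>y x. if card y = card x + 1 then A y x else 0)"

definition bpart :: "'v op \<Rightarrow> 'v op" where
  "bpart A = (\<lambda>y x. if card y = card x then A y x else 0)"

definition Bop :: "real \<Rightarrow> 'v op \<Rightarrow> 'v op" where
  "Bop \<beta> A = (\<lambda>y x. dpart A y x - adj (dpart A) y x + \<i> * of_real \<beta> * bpart A y x)"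

definition l2norm :: "'v set set \<Rightarrow> ('v set \<Rightarrow> complex) \<Rightarrow> real" where
  "l2norm S f = sqrt (\<Sum>x\<in>S. (cmod (f x))\<^sup>2)"

definition opnorm :: "'v set set \<Rightarrow> 'v op \<Rightarrow> real" where
  "opnorm S A = Sup {l2norm S (\<lambda>y. \<Sum>x\<in>S. A y x * f x) | f. l2norm S f \<le> 1}"

definition op_spectrum :: "'v set set \<Rightarrow> 'v op \<Rightarrow> complex set" where
  "op_spectrum S A = {c. \<exists>f. (\<exists>x\<in>S. f x \<noteq> 0) \<and>
      (\<forall>y\<in>S. (\<Sum>x\<in>S. A y x * f x) = c * f y)}"

end

theory Submission
  imports Defs
begin


section \<open>Matrix algebra\<close>

lemma mmul_assoc: "mmul S (mmul S A B) C = mmul S A (mmul S B C)"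
  by (auto simp: mmul_def fun_eq_iff sum_distrib_left sum_distrib_right mult.assoc intro: sum.swap)

lemma mmul_msub_left: "mmul S (msub A B) C = msub (mmul S A C) (mmul S B C)"
  by (auto simp: mmul_def msub_def fun_eq_iff algebra_simps sum_subtractf)
lemma mmul_msub_right: "mmul S C (msub A B) = msub (mmul S C A) (mmul S C B)"
  by (auto simp: mmul_def msub_def fun_eq_iff algebra_simps sum_subtractf)
lemma mmul_madd_left: "mmul S (madd A B) C = madd (mmul S A C) (mmul S B C)"
  by (auto simp: mmul_def madd_def fun_eq_iff algebra_simps sum.distrib)
lemma mmul_madd_right: "mmul S C (madd A B) = madd (mmul S C A) (mmul S C B)"
  by (auto simp: mmul_def madd_def fun_eq_iff algebra_simps sum.distrib)

lemma adj_mmul: "adj (mmul S A B) = mmul S (adj B) (adj A)"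
  by (auto simp: mmul_def adj_def fun_eq_iff mult.commute)
lemma adj_adj[simp]: "adj (adj A) = A"
  by (simp add: adj_def)
lemma adj_msub: "adj (msub A B) = msub (adj A) (adj B)"
  by (simp add: adj_def msub_def fun_eq_iff)
lemma adj_madd: "adj (madd A B) = madd (adj A) (adj B)"
  by (simp add: adj_def madd_def fun_eq_iff)

definition smul :: "complex \<Rightarrow> 'v op \<Rightarrow> 'v op" where
  "smul c A = (\<lambda>y x. c * A y x)"

lemma mmul_smul_left: "mmul S (smul c A) C = smul c (mmul S A C)"
  by (simp add: mmul_def smul_def fun_eq_iff sum_distrib_left mult.assoc)
lemma mmul_smul_right: "mmul S C (smul c A) = smul c (mmul S C A)"
  by (simp add: mmul_def smul_def fun_eq_iff sum_distrib_left algebra_simps)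

definition comm :: "'v set set \<Rightarrow> 'v op \<Rightarrow> 'v op \<Rightarrow> 'v op" where
  "comm S A C = msub (mmul S A C) (mmul S C A)"

lemma jacobi: "comm S (comm S B D) L = madd (comm S B (comm S D L)) (comm S (comm S B L) D)"
  unfolding comm_def mmul_msub_left mmul_msub_right mmul_assoc
  by (simp add: msub_def madd_def fun_eq_iff)




section \<open>d0 squared is zero\<close>

lemma finite_simplices: "finite V \<Longrightarrow> finite (simplices V E)"
  unfolding simplices_def is_clique_def
  by (rule finite_subset[of _ "Pow V"]) auto

lemma simplex_finite: "finite V \<Longrightarrow> x \<in> simplices V E \<Longrightarrow> finite x"
  unfolding simplices_def is_clique_def by (auto intro: finite_subset)

lemma simplex_sub: "y \<in> simplices V E \<Longrightarrow> x \<subseteq> y \<Longrightarrow> x \<noteq> {} \<Longrightarrow> x \<in> simplices V E"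
  unfolding simplices_def is_clique_def by auto

lemma cnt_ins_less:
  fixes a b :: "'v::linorder"
  shows "finite A \<Longrightarrow> b \<notin> A \<Longrightarrow> b < a \<Longrightarrow> card {v\<in>insert b A. v < a} = card {v\<in>A. v<a} + 1"
proof -
  assume "finite A" "b \<notin> A" "b < a"
  then have "{v\<in>insert b A. v < a} = insert b {v\<in>A. v<a}" by auto
  then show ?thesis using \<open>finite A\<close> \<open>b \<notin> A\<close> by simp
qed

lemma cnt_ins_ge:
  fixes a b :: "'v::linorder"
  shows "a \<le> b \<Longrightarrow> {v\<in>insert b A. v < a} = {v\<in>A. v<a}"
  by auto

lemma the_single: "(THE w. w \<in> insert a A - A) = a" if "a \<notin> A" for a :: 'a
  using that by auto

lemma d0_sq:
  fixes V :: "'v::linorder set"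
  assumes finV: "finite V" and S: "S = simplices V E"
  shows "mmul S (d0 S) (d0 S) y x = 0"
proof -
  let ?P = "\<lambda>z. z \<in> S \<and> x \<subseteq> z \<and> z \<subseteq> y \<and> card z = card x + 1 \<and> card y = card z + 1 \<and> y \<in> S \<and> x \<in> S"
  have zero: "d0 S y z * d0 S z x = 0" if "\<not> ?P z" for z
  proof (cases "y \<in> S \<and> z \<in> S \<and> z \<subseteq> y \<and> card y = card z + 1")
    case True
    then have "\<not> (z \<in> S \<and> x \<in> S \<and> x \<subseteq> z \<and> card z = card x + 1)" using that by blast
    then have "d0 S z x = 0" unfolding d0_def by (simp only: if_False)
    then show ?thesis by simp
  next
    case False
    then have "d0 S y z = 0" unfolding d0_def by (simp only: if_False)
    then show ?thesis by simp
  qed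
  show ?thesis
  proof (cases "\<exists>z. ?P z")
    case False
    then have "\<forall>z\<in>S. d0 S y z * d0 S z x = 0" using zero by blast
    then show ?thesis unfolding mmul_def by (intro sum.neutral) blast
  next
    case True
    then obtain z0 where z0: "?P z0" by blast
    have yS: "y \<in> S" using z0 by blast
    have fy: "finite y" using simplex_finite[OF finV, of y E] yS S by simp
    have xy: "x \<subseteq> y" using z0 by (meson subset_trans)
    have fx: "finite x" using finite_subset[OF xy fy] .
    have c1: "card y = card x + 2" using z0 by linarith
    have cyx: "card (y - x) = 2" using c1 card_Diff_subset[OF fx xy] by simp
    then obtain a b where ab: "y - x = {a, b}" "a \<noteq> b" using cyx unfolding card_2_iff by blast
    obtain u w where uw: "y - x = {u, w}" "u < w"
    proof (cases "a < b")
      case True then show ?thesis using that ab by blast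
    next
      case False then have "b < a" using ab(2) by simp
      then show ?thesis using that[of b a] ab by (simp add: insert_commute)
    qed
    have ux: "u \<notin> x" "w \<notin> x" "u \<in> y" "w \<in> y" using uw by auto
    have yeq: "y = insert u (insert w x)" using uw xy by auto
    have zs: "?P z \<longleftrightarrow> z = insert u x \<or> z = insert w x" for z
    proof
      assume Pz: "?P z"
      have fz: "finite z" using Pz fy finite_subset by blast
      have "card (z - x) = 1" using Pz card_Diff_subset[OF fx] by simp
      then obtain a where a: "z - x = {a}" by (auto simp: card_Suc_eq)
      then have "a \<in> y - x" using Pz by auto
      then have "a = u \<or> a = w" using uw by auto
      moreover have "z = insert a x" using a Pz by auto
      ultimately show "z = insert u x \<or> z = insert w x" by auto
    next
      assume "z = insert u x \<or> z = insert w x"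
      moreover have "insert u x \<in> S" "insert w x \<in> S"
        using simplex_sub[of y V E] z0 yeq S by auto
      moreover have "card (insert u x) = card x + 1" "card (insert w x) = card x + 1"
        using fx ux by auto
      moreover have "card y = card x + 2" by (rule c1)
      moreover have "y \<in> S" "x \<in> S" using z0 by blast+
      moreover have "x \<subseteq> insert u x" "x \<subseteq> insert w x" "insert u x \<subseteq> y" "insert w x \<subseteq> y"
        using yeq by auto
      ultimately show "?P z" by auto
    qed
    have "mmul S (d0 S) (d0 S) y x = (\<Sum>z\<in>{insert u x, insert w x}. d0 S y z * d0 S z x)"
      unfolding mmul_def
    proof (rule sum.mono_neutral_right)
      show "finite S" using finite_simplices[OF finV] S by simp
      show "{insert u x, insert w x} \<subseteq> S" using simplex_sub[of y V E] z0 yeq S by auto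
      show "\<forall>i\<in>S - {insert u x, insert w x}. d0 S y i * d0 S i x = 0"
      proof
        fix i assume i: "i \<in> S - {insert u x, insert w x}"
        then have "i \<noteq> insert u x" "i \<noteq> insert w x" by auto
        then have "\<not> ?P i" using zs[of i] by (simp only: de_Morgan_disj simp_thms)
        then show "d0 S y i * d0 S i x = 0" by (rule zero)
      qed
    qed
    also have "\<dots> = d0 S y (insert u x) * d0 S (insert u x) x + d0 S y (insert w x) * d0 S (insert w x) x"
      using ux uw by (subst sum.insert) auto
    also have "\<dots> = 0"
    proof -
      have P1: "?P (insert u x)" "?P (insert w x)" by (rule zs[THEN iffD2], simp)+
      have "y - insert u x = {w}" using yeq ux uw by auto
      then have t1: "(THE v. v \<in> y - insert u x) = w" by simp
      have "insert u x - x = {u}" using ux by auto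
      then have t2: "(THE v. v \<in> insert u x - x) = u" by simp
      have "y - insert w x = {u}" using yeq ux uw by auto
      then have t3: "(THE v. v \<in> y - insert w x) = u" by simp
      have "insert w x - x = {w}" using ux by auto
      then have t4: "(THE v. v \<in> insert w x - x) = w" by simp
      have c1: "card {v\<in>y. v < w} = card {v\<in>x. v<w} + 1"
        unfolding yeq using cnt_ins_less[of "insert w x" u w] cnt_ins_ge[of w w x] fx ux uw by auto
      have c2: "card {v\<in>insert u x. v < u} = card {v\<in>x. v<u}"
        using cnt_ins_ge[of u u x] by simp
      have c3: "card {v\<in>y. v < u} = card {v\<in>x. v<u}"
        unfolding yeq using cnt_ins_ge[of u u "insert w x"] cnt_ins_ge[of u w x] uw by simp
      have c4: "card {v\<in>insert w x. v < w} = card {v\<in>x. v<w}"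
        using cnt_ins_ge[of w w x] by simp
      have e1: "d0 S y (insert u x) = (-1) ^ (card {v\<in>x. v<w} + 1)"
        using P1(1) unfolding d0_def t1 c1 by simp
      have e2: "d0 S (insert u x) x = (-1) ^ (card {v\<in>x. v<u})"
        using P1(1) unfolding d0_def t2 c2 by simp
      have e3: "d0 S y (insert w x) = (-1) ^ (card {v\<in>x. v<u})"
        using P1(2) unfolding d0_def t3 c3 by simp
      have e4: "d0 S (insert w x) x = (-1) ^ (card {v\<in>x. v<w})"
        using P1(2) unfolding d0_def t4 c4 by simp
      show ?thesis unfolding e1 e2 e3 e4 by simp
    qed
    finally show ?thesis .
  qed
qed



definition lpart :: "'v op \<Rightarrow> 'v op" where
  "lpart A = (\<lambda>y x. if card x = card y + 1 then A y x else 0)"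

definition offtri :: "'v op \<Rightarrow> 'v op" where
  "offtri A = (\<lambda>y x. if card y = card x \<or> card y = card x + 1 \<or> card x = card y + 1 then 0 else A y x)"

lemma Dirac0_herm: "adj (Dirac0 S) = Dirac0 S"
  unfolding Dirac0_def adj_madd adj_adj by (simp add: madd_def fun_eq_iff add.commute)

lemma Lap_herm: "adj (Laplacian S) = Laplacian S"
  by (simp add: Laplacian_def adj_mmul Dirac0_herm)

lemma adj_comm: "adj (comm S A C) = comm S (adj C) (adj A)"
  by (simp add: comm_def adj_msub adj_mmul)

lemma Bop_eq: "Bop \<beta> A = madd (msub (dpart A) (adj (dpart A))) (smul (\<i> * of_real \<beta>) (bpart A))"
  by (simp add: Bop_def madd_def msub_def smul_def fun_eq_iff)

lemma Lap_block:
  fixes V :: "'v::linorder set"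
  assumes finV: "finite V" and S: "S = simplices V E" and ne: "card y \<noteq> card x"
  shows "Laplacian S y x = 0"
proof -
  let ?d = "d0 S"
  have L: "Laplacian S = madd (madd (mmul S ?d ?d) (mmul S ?d (adj ?d))) (madd (mmul S (adj ?d) ?d) (mmul S (adj ?d) (adj ?d)))"
    unfolding Laplacian_def Dirac0_def mmul_madd_left mmul_madd_right
    by (simp add: madd_def fun_eq_iff algebra_simps)
  have z1: "mmul S ?d ?d y x = 0" using d0_sq[OF finV S] .
  have z4: "mmul S (adj ?d) (adj ?d) y x = 0"
    using d0_sq[OF finV S, of x y] by (simp add: adj_mmul[symmetric]) (simp add: adj_def)
  have z2: "mmul S ?d (adj ?d) y x = 0"
    unfolding mmul_def adj_def d0_def using ne by (intro sum.neutral) auto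
  have z3: "mmul S (adj ?d) ?d y x = 0"
    unfolding mmul_def adj_def d0_def using ne by (intro sum.neutral) auto
  show ?thesis unfolding L by (simp add: madd_def z1 z2 z3 z4)
qed

lemma block_dpart_left:
  assumes "\<And>y x. card y \<noteq> card x \<Longrightarrow> L y x = 0"
  shows "mmul S (dpart A) L = dpart (mmul S A L)"
  unfolding mmul_def dpart_def fun_eq_iff
proof (intro allI)
  fix y x
  show "(\<Sum>z\<in>S. (if card y = card z + 1 then A y z else 0) * L z x) =
        (if card y = card x + 1 then \<Sum>z\<in>S. A y z * L z x else 0)"
    using assms by (auto intro!: sum.cong sum.neutral)
qed

lemma block_dpart_right:
  assumes "\<And>y x. card y \<noteq> card x \<Longrightarrow> L y x = 0"
  shows "mmul S L (dpart A) = dpart (mmul S L A)"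
  unfolding mmul_def dpart_def fun_eq_iff
proof (intro allI)
  fix y x
  show "(\<Sum>z\<in>S. L y z * (if card z = card x + 1 then A z x else 0)) =
        (if card y = card x + 1 then \<Sum>z\<in>S. L y z * A z x else 0)"
    using assms by (auto intro!: sum.cong sum.neutral)
qed

lemma block_bpart_left:
  assumes "\<And>y x. card y \<noteq> card x \<Longrightarrow> L y x = 0"
  shows "mmul S (bpart A) L = bpart (mmul S A L)"
  unfolding mmul_def bpart_def fun_eq_iff
proof (intro allI)
  fix y x
  show "(\<Sum>z\<in>S. (if card y = card z then A y z else 0) * L z x) =
        (if card y = card x then \<Sum>z\<in>S. A y z * L z x else 0)"
    using assms by (auto intro!: sum.cong sum.neutral)
qed

lemma block_bpart_right:
  assumes "\<And>y x. card y \<noteq> card x \<Longrightarrow> L y x = 0"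
  shows "mmul S L (bpart A) = bpart (mmul S L A)"
  unfolding mmul_def bpart_def fun_eq_iff
proof (intro allI)
  fix y x
  show "(\<Sum>z\<in>S. L y z * (if card z = card x then A z x else 0)) =
        (if card y = card x then \<Sum>z\<in>S. L y z * A z x else 0)"
    using assms by (auto intro!: sum.cong sum.neutral)
qed

lemma comm_madd_left: "comm S (madd A B) C = madd (comm S A C) (comm S B C)"
  unfolding comm_def mmul_madd_left mmul_madd_right by (simp add: madd_def msub_def fun_eq_iff)
lemma comm_msub_left: "comm S (msub A B) C = msub (comm S A C) (comm S B C)"
  unfolding comm_def mmul_msub_left mmul_msub_right by (simp add: madd_def msub_def fun_eq_iff)
lemma comm_smul_left: "comm S (smul c A) C = smul c (comm S A C)"
  unfolding comm_def mmul_smul_left mmul_smul_right by (simp add: smul_def msub_def fun_eq_iff algebra_simps)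

lemma comm_BL:
  assumes blk: "\<And>y x. card y \<noteq> card x \<Longrightarrow> L y x = 0" and herm: "adj L = L"
  shows "comm S (Bop \<beta> A) L = madd (madd (dpart (comm S A L)) (adj (dpart (comm S A L))))
           (smul (\<i> * of_real \<beta>) (bpart (comm S A L)))"
proof -
  have a: "comm S (dpart A) L = dpart (comm S A L)"
  proof -
    have "comm S (dpart A) L = msub (mmul S (dpart A) L) (mmul S L (dpart A))" by (simp add: comm_def)
    also have "\<dots> = msub (dpart (mmul S A L)) (dpart (mmul S L A))"
      using block_dpart_left[of L S A, OF blk] block_dpart_right[of L S A, OF blk] by simp
    finally show ?thesis by (simp add: dpart_def msub_def comm_def fun_eq_iff)
  qed
  have b: "comm S (bpart A) L = bpart (comm S A L)"
  proof -
    have "comm S (bpart A) L = msub (mmul S (bpart A) L) (mmul S L (bpart A))" by (simp add: comm_def)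
    also have "\<dots> = msub (bpart (mmul S A L)) (bpart (mmul S L A))"
      using block_bpart_left[of L S A, OF blk] block_bpart_right[of L S A, OF blk] by simp
    finally show ?thesis by (simp add: bpart_def msub_def comm_def fun_eq_iff)
  qed
  have c: "comm S (adj (dpart A)) L = smul (-1) (adj (dpart (comm S A L)))"
  proof -
    have "comm S (adj (dpart A)) L = comm S (adj (dpart A)) (adj L)" using herm by simp
    also have "\<dots> = adj (comm S L (dpart A))" by (simp add: adj_comm)
    also have "\<dots> = smul (-1) (adj (comm S (dpart A) L))"
      by (simp add: comm_def adj_def smul_def msub_def fun_eq_iff)
    finally show ?thesis using a by simp
  qed
  show ?thesis
    unfolding Bop_eq comm_madd_left comm_msub_left comm_smul_left a b c
    by (simp add: madd_def msub_def smul_def fun_eq_iff)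
qed



lemma cmod_sq_Re: "(cmod z)\<^sup>2 = Re (z * cnj z)"
  using arg_cong[OF complex_norm_square[of z], of Re] by simp

lemma vderiv_cmod_sq:
  assumes "(h has_vector_derivative h') (at t)"
  shows "((\<lambda>s. (cmod (h s))\<^sup>2) has_real_derivative (2 * Re (cnj (h t) * h'))) (at t)"
proof -
  have "((\<lambda>s. h s * cnj (h s)) has_vector_derivative (h t * cnj h' + h' * cnj (h t))) (at t)"
    by (intro has_vector_derivative_mult has_vector_derivative_cnj assms)
  then have "((\<lambda>s. Re (h s * cnj (h s))) has_real_derivative Re (h t * cnj h' + h' * cnj (h t))) (at t)"
    by (rule has_field_derivative_Re)
  moreover have "Re (h t * cnj h' + h' * cnj (h t)) = 2 * Re (cnj (h t) * h')"
    by (simp add: algebra_simps)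
  ultimately show ?thesis by (simp add: cmod_sq_Re algebra_simps)
qed

lemma gronwall0:
  fixes P P' :: "real \<Rightarrow> real"
  assumes der: "\<And>t. (P has_real_derivative P' t) (at t)"
    and nn: "\<And>t. P t \<ge> 0" and z: "P 0 = 0"
    and bd: "\<And>t. t \<in> {-T..T} \<Longrightarrow> \<bar>P' t\<bar> \<le> K * P t"
    and t: "t \<in> {-T..T}"
  shows "P t = 0"
proof (cases "t \<ge> 0")
  case True
  let ?psi = "\<lambda>s. P s * exp (- K * s)"
  have "?psi t \<le> ?psi 0"
  proof (rule DERIV_nonpos_imp_nonincreasing[of 0 t ?psi, OF True])
    fix x assume x: "0 \<le> x" "x \<le> t"
    then have "x \<in> {-T..T}" using t by auto
    then have "P' x - K * P x \<le> 0" using bd[of x] by linarith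
    then have "(P' x - K * P x) * exp (- K * x) \<le> 0" by (simp add: mult_nonpos_nonneg)
    moreover have "DERIV ?psi x :> P x * (exp (- K * x) * (- K)) + P' x * exp (- K * x)"
      by (auto intro!: derivative_eq_intros der)
    ultimately show "\<exists>y. DERIV ?psi x :> y \<and> y \<le> 0"
      by (intro exI[of _ "P x * (exp (- K * x) * (- K)) + P' x * exp (- K * x)"]) (simp add: algebra_simps)
  qed
  then have "P t * exp (- K * t) \<le> 0" using z by simp
  then have "P t \<le> 0" by (simp add: mult_le_0_iff)
  then show ?thesis using nn[of t] by simp
next
  case False
  let ?psi = "\<lambda>s. P s * exp (K * s)"
  have "?psi t \<le> ?psi 0"
  proof (rule DERIV_nonneg_imp_nondecreasing[of t 0 ?psi])
    show "t \<le> 0" using False by simp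
    fix x assume x: "t \<le> x" "x \<le> 0"
    then have "x \<in> {-T..T}" using t by auto
    then have "P' x + K * P x \<ge> 0" using bd[of x] by linarith
    then have "(P' x + K * P x) * exp (K * x) \<ge> 0" by simp
    moreover have "DERIV ?psi x :> P x * (exp (K * x) * K) + P' x * exp (K * x)"
      by (auto intro!: derivative_eq_intros der)
    ultimately show "\<exists>y. DERIV ?psi x :> y \<and> y \<ge> 0"
      by (intro exI[of _ "P x * (exp (K * x) * K) + P' x * exp (K * x)"]) (simp add: algebra_simps)
  qed
  then have "P t * exp (K * t) \<le> 0" using z by simp
  then have "P t \<le> 0" by (simp add: mult_le_0_iff)
  then show ?thesis using nn[of t] by simp
qed

lemma mmul_vderiv:
  assumes A: "\<forall>y\<in>S. \<forall>x\<in>S. ((\<lambda>s. A s y x) has_vector_derivative A' y x) (at t)"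
    and C: "\<forall>y\<in>S. \<forall>x\<in>S. ((\<lambda>s. C s y x) has_vector_derivative C' y x) (at t)"
    and yx: "y \<in> S" "x \<in> S"
  shows "((\<lambda>s. mmul S (A s) (C s) y x) has_vector_derivative
            (mmul S (A t) C' y x + mmul S A' (C t) y x)) (at t)"
  unfolding mmul_def
  by (rule has_vector_derivative_eq_rhs, (rule has_vector_derivative_sum has_vector_derivative_mult)+)
     (use A C yx in \<open>auto simp: sum.distrib\<close>)

lemma cmod_mmul_le: "cmod (mmul S A C y x) \<le> (\<Sum>z\<in>S. cmod (A y z) * cmod (C z x))"
  unfolding mmul_def by (rule order.trans[OF norm_sum]) (simp add: norm_mult)



locale dflow =
  fixes S :: "'v::linorder set set" and \<beta> :: real and D :: "real \<Rightarrow> 'v op"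
  assumes finS: "finite S"
    and blk: "\<And>y x. card y \<noteq> card x \<Longrightarrow> Laplacian S y x = 0"
    and init: "\<forall>y\<in>S. \<forall>x\<in>S. D 0 y x = Dirac0 S y x"
    and ode: "\<forall>t. \<forall>y\<in>S. \<forall>x\<in>S.
       ((\<lambda>s. D s y x) has_vector_derivative
          msub (mmul S (Bop \<beta> (D t)) (D t)) (mmul S (D t) (Bop \<beta> (D t))) y x) (at t)"
begin

abbreviation "L \<equiv> Laplacian S"
definition "B t = Bop \<beta> (D t)"
definition "F t = comm S (B t) (D t)"
definition "e1 t = msub (D t) (adj (D t))"
definition "e2 t = offtri (D t)"
definition "e3 t = comm S (D t) L"
definition "e6 t = msub (mmul S (D t) (D t)) L"

definition "Phi t = (\<Sum>y\<in>S. \<Sum>x\<in>S. (cmod (e1 t y x))\<^sup>2 + (cmod (e2 t y x))\<^sup>2 + (cmod (e3 t y x))\<^sup>2 + (cmod (e6 t y x))\<^sup>2)"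

lemma dD: "\<forall>y\<in>S. \<forall>x\<in>S. ((\<lambda>s. D s y x) has_vector_derivative F t y x) (at t)"
  using ode by (simp add: F_def B_def comm_def)

lemma dL: "\<forall>y\<in>S. \<forall>x\<in>S. ((\<lambda>s. L y x) has_vector_derivative 0) (at t)"
  by simp

lemma de1: "y \<in> S \<Longrightarrow> x \<in> S \<Longrightarrow> ((\<lambda>s. e1 s y x) has_vector_derivative msub (F t) (adj (F t)) y x) (at t)"
  unfolding e1_def msub_def adj_def
  using dD by (auto intro!: derivative_intros)

lemma de2: "y \<in> S \<Longrightarrow> x \<in> S \<Longrightarrow> ((\<lambda>s. e2 s y x) has_vector_derivative offtri (F t) y x) (at t)"
  unfolding e2_def offtri_def
  using dD by (auto intro!: derivative_intros)

lemma de3: "y \<in> S \<Longrightarrow> x \<in> S \<Longrightarrow> ((\<lambda>s. e3 s y x) has_vector_derivative comm S (F t) L y x) (at t)"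
  unfolding e3_def comm_def msub_def
  apply (rule has_vector_derivative_eq_rhs)
   apply (rule has_vector_derivative_diff)
    apply (rule mmul_vderiv[OF dD dL]; assumption)
   apply (rule mmul_vderiv[OF dL dD]; assumption)
  apply (simp add: mmul_def)
  done

lemma de6: "y \<in> S \<Longrightarrow> x \<in> S \<Longrightarrow> ((\<lambda>s. e6 s y x) has_vector_derivative madd (mmul S (F t) (D t)) (mmul S (D t) (F t)) y x) (at t)"
  unfolding e6_def msub_def madd_def
  apply (rule has_vector_derivative_eq_rhs)
   apply (rule has_vector_derivative_diff)
    apply (rule mmul_vderiv[OF dD dD]; assumption)
   apply (rule has_vector_derivative_const)
  apply simp
  done

definition "Phi' t = (\<Sum>y\<in>S. \<Sum>x\<in>S.
   2 * Re (cnj (e1 t y x) * msub (F t) (adj (F t)) y x) + 2 * Re (cnj (e2 t y x) * offtri (F t) y x)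
 + 2 * Re (cnj (e3 t y x) * comm S (F t) L y x) + 2 * Re (cnj (e6 t y x) * madd (mmul S (F t) (D t)) (mmul S (D t) (F t)) y x))"

lemma dPhi: "(Phi has_real_derivative Phi' t) (at t)"
  unfolding Phi_def[abs_def] Phi'_def
  by (intro DERIV_sum DERIV_add vderiv_cmod_sq de1 de2 de3 de6)

end


lemma comm_msub_right: "comm S C (msub A B) = msub (comm S C A) (comm S C B)"
  unfolding comm_def mmul_msub_left mmul_msub_right by (simp add: msub_def fun_eq_iff)

context dflow begin

lemma adjB: "adj (B t) = msub (smul (\<i> * of_real \<beta>) (bpart (e1 t))) (B t)"
  unfolding B_def Bop_def adj_def e1_def msub_def smul_def bpart_def dpart_def
  by (auto simp: fun_eq_iff algebra_simps)

lemma adjD: "adj (D t) = msub (D t) (e1 t)"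
  unfolding e1_def msub_def by (simp add: fun_eq_iff)

lemma I1: "msub (F t) (adj (F t)) =
   madd (madd (comm S (smul (\<i> * of_real \<beta>) (bpart (e1 t))) (D t)) (comm S (B t) (e1 t)))
        (comm S (e1 t) (smul (\<i> * of_real \<beta>) (bpart (e1 t))))"
proof -
  define X where "X = smul (\<i> * of_real \<beta>) (bpart (e1 t))"
  have "adj (F t) = comm S (msub (D t) (e1 t)) (msub X (B t))"
    by (simp add: F_def adj_comm adjB adjD X_def)
  then show ?thesis
    unfolding X_def[symmetric] F_def comm_def mmul_msub_left mmul_msub_right
    by (simp add: msub_def madd_def fun_eq_iff)
qed

lemma I3: "comm S (F t) L = madd (comm S (B t) (e3 t)) (comm S (comm S (B t) L) (D t))"
  unfolding F_def e3_def by (rule jacobi)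

lemma I4: "madd (mmul S (F t) (D t)) (mmul S (D t) (F t)) = madd (comm S (B t) (e6 t)) (comm S (B t) L)"
  unfolding F_def e6_def comm_def mmul_msub_left mmul_msub_right mmul_assoc
  by (simp add: msub_def madd_def fun_eq_iff)

lemma I2: "offtri (F t) = offtri (comm S (B t) (madd (lpart (e1 t)) (e2 t)))"
  unfolding fun_eq_iff
proof (intro allI)
  fix y x
  show "offtri (F t) y x = offtri (comm S (B t) (madd (lpart (e1 t)) (e2 t))) y x"
  proof (cases "card y = card x \<or> card y = card x + 1 \<or> card x = card y + 1")
    case True then show ?thesis by (simp add: offtri_def)
  next
    case False
    have "F t y x = comm S (B t) (madd (lpart (e1 t)) (e2 t)) y x"
      unfolding F_def comm_def msub_def mmul_def sum_subtractf[symmetric]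
    proof (rule sum.cong[OF refl])
      fix z
      show "B t y z * D t z x - D t y z * B t z x =
        B t y z * madd (lpart (e1 t)) (e2 t) z x - madd (lpart (e1 t)) (e2 t) y z * B t z x"
        using False
        unfolding B_def Bop_def madd_def lpart_def e1_def e2_def offtri_def msub_def adj_def dpart_def bpart_def
        by (auto simp: algebra_simps)
    qed
    then show ?thesis using False by (simp add: offtri_def)
  qed
qed

lemma YL: "comm S (B t) L = madd (madd (dpart (e3 t)) (adj (dpart (e3 t)))) (smul (\<i> * of_real \<beta>) (bpart (e3 t)))"
  unfolding B_def e3_def by (rule comm_BL[OF blk Lap_herm])

end


context dflow begin

definition "bnd T X \<longleftrightarrow> (\<exists>M. \<forall>t\<in>{-T..T}. \<forall>y\<in>S. \<forall>x\<in>S. cmod (X t y x) \<le> M)"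
definition "sml T X \<longleftrightarrow> (\<exists>K. \<forall>t\<in>{-T..T}. \<forall>y\<in>S. \<forall>x\<in>S. cmod (X t y x) \<le> K * sqrt (Phi t))"

lemma Phi_nn: "Phi t \<ge> 0"
  unfolding Phi_def by (intro sum_nonneg add_nonneg_nonneg) auto

lemma e_le_Phi:
  assumes "y \<in> S" "x \<in> S"
  shows "(cmod (e1 t y x))\<^sup>2 \<le> Phi t" "(cmod (e2 t y x))\<^sup>2 \<le> Phi t"
        "(cmod (e3 t y x))\<^sup>2 \<le> Phi t" "(cmod (e6 t y x))\<^sup>2 \<le> Phi t"
proof -
  let ?f = "\<lambda>y x. (cmod (e1 t y x))\<^sup>2 + (cmod (e2 t y x))\<^sup>2 + (cmod (e3 t y x))\<^sup>2 + (cmod (e6 t y x))\<^sup>2"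
  have "?f y x \<le> (\<Sum>x\<in>S. ?f y x)"
    by (rule member_le_sum[OF assms(2)]) (auto simp: finS)
  also have "\<dots> \<le> (\<Sum>y\<in>S. \<Sum>x\<in>S. ?f y x)"
    by (rule member_le_sum[OF assms(1)]) (auto intro!: sum_nonneg simp: finS)
  finally have "?f y x \<le> Phi t" unfolding Phi_def .
  then show "(cmod (e1 t y x))\<^sup>2 \<le> Phi t" "(cmod (e2 t y x))\<^sup>2 \<le> Phi t"
        "(cmod (e3 t y x))\<^sup>2 \<le> Phi t" "(cmod (e6 t y x))\<^sup>2 \<le> Phi t"
    by (smt (verit) zero_le_power2)+
qed

lemma le_sqrt_of_sq: "a\<^sup>2 \<le> P \<Longrightarrow> a \<ge> 0 \<Longrightarrow> a \<le> sqrt P"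
  using real_sqrt_le_mono by fastforce

lemma sml_e: "sml T e1" "sml T e2" "sml T e3" "sml T e6"
  unfolding sml_def
  by (rule exI[of _ 1], auto intro!: le_sqrt_of_sq e_le_Phi)+

lemma sml_add: "sml T X \<Longrightarrow> sml T Y \<Longrightarrow> sml T (\<lambda>t. madd (X t) (Y t))"
  unfolding sml_def madd_def
proof (elim exE)
  fix K1 K2
  assume 1: "\<forall>t\<in>{-T..T}. \<forall>y\<in>S. \<forall>x\<in>S. cmod (X t y x) \<le> K1 * sqrt (Phi t)"
     and 2: "\<forall>t\<in>{-T..T}. \<forall>y\<in>S. \<forall>x\<in>S. cmod (Y t y x) \<le> K2 * sqrt (Phi t)"
  show "\<exists>K. \<forall>t\<in>{-T..T}. \<forall>y\<in>S. \<forall>x\<in>S. cmod (X t y x + Y t y x) \<le> K * sqrt (Phi t)"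
  proof (intro exI[of _ "K1 + K2"] ballI)
    fix t y x assume "t \<in> {-T..T}" "y \<in> S" "x \<in> S"
    then show "cmod (X t y x + Y t y x) \<le> (K1 + K2) * sqrt (Phi t)"
      using 1 2 norm_triangle_ineq[of "X t y x" "Y t y x"] by (fastforce simp: algebra_simps)
  qed
qed

lemma sml_smul: "sml T X \<Longrightarrow> sml T (\<lambda>t. smul c (X t))"
  unfolding sml_def smul_def
proof (elim exE)
  fix K1
  assume 1: "\<forall>t\<in>{-T..T}. \<forall>y\<in>S. \<forall>x\<in>S. cmod (X t y x) \<le> K1 * sqrt (Phi t)"
  show "\<exists>K. \<forall>t\<in>{-T..T}. \<forall>y\<in>S. \<forall>x\<in>S. cmod (c * X t y x) \<le> K * sqrt (Phi t)"
  proof (intro exI[of _ "cmod c * K1"] ballI)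
    fix t y x assume "t \<in> {-T..T}" "y \<in> S" "x \<in> S"
    then show "cmod (c * X t y x) \<le> (cmod c * K1) * sqrt (Phi t)"
      using 1 by (auto simp: norm_mult mult.assoc intro: mult_left_mono)
  qed
qed

lemma sml_sub: "sml T X \<Longrightarrow> sml T Y \<Longrightarrow> sml T (\<lambda>t. msub (X t) (Y t))"
proof -
  assume "sml T X" "sml T Y"
  then have "sml T (\<lambda>t. madd (X t) (smul (-1) (Y t)))" by (intro sml_add sml_smul)
  moreover have "(\<lambda>t. madd (X t) (smul (-1) (Y t))) = (\<lambda>t. msub (X t) (Y t))"
    by (simp add: madd_def msub_def smul_def fun_eq_iff)
  ultimately show ?thesis by simp
qed

lemma sml_mono:
  assumes "sml T X" "\<And>t y x. y \<in> S \<Longrightarrow> x \<in> S \<Longrightarrow> \<exists>y'\<in>S. \<exists>x'\<in>S. cmod (Y t y x) \<le> cmod (X t y' x')"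
  shows "sml T Y"
proof -
  obtain K where K: "\<forall>t\<in>{-T..T}. \<forall>y\<in>S. \<forall>x\<in>S. cmod (X t y x) \<le> K * sqrt (Phi t)"
    using assms(1) unfolding sml_def by blast
  show ?thesis unfolding sml_def
  proof (intro exI[of _ K] ballI)
    fix t y x assume "t \<in> {-T..T}" "y \<in> S" "x \<in> S"
    then show "cmod (Y t y x) \<le> K * sqrt (Phi t)" using assms(2) K by (meson order.trans)
  qed
qed

lemma sml_adj: "sml T X \<Longrightarrow> sml T (\<lambda>t. adj (X t))"
  by (erule sml_mono) (auto simp: adj_def)
lemma sml_dpart: "sml T X \<Longrightarrow> sml T (\<lambda>t. dpart (X t))"
  by (erule sml_mono) (auto simp: dpart_def)
lemma sml_bpart: "sml T X \<Longrightarrow> sml T (\<lambda>t. bpart (X t))"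
  by (erule sml_mono) (auto simp: bpart_def)
lemma sml_lpart: "sml T X \<Longrightarrow> sml T (\<lambda>t. lpart (X t))"
  by (erule sml_mono) (auto simp: lpart_def)
lemma sml_offtri: "sml T X \<Longrightarrow> sml T (\<lambda>t. offtri (X t))"
  by (erule sml_mono) (auto simp: offtri_def)

lemma sml_mmul_l: "bnd T A \<Longrightarrow> sml T C \<Longrightarrow> sml T (\<lambda>t. mmul S (A t) (C t))"
proof -
  assume "bnd T A" "sml T C"
  then obtain M K where M: "\<forall>t\<in>{-T..T}. \<forall>y\<in>S. \<forall>x\<in>S. cmod (A t y x) \<le> M"
    and K: "\<forall>t\<in>{-T..T}. \<forall>y\<in>S. \<forall>x\<in>S. cmod (C t y x) \<le> K * sqrt (Phi t)"
    unfolding bnd_def sml_def by blast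
  show ?thesis unfolding sml_def
  proof (intro exI[of _ "real (card S) * M * K"] ballI)
    fix t y x assume t: "t \<in> {-T..T}" and y: "y \<in> S" and x: "x \<in> S"
    have "cmod (mmul S (A t) (C t) y x) \<le> (\<Sum>z\<in>S. cmod (A t y z) * cmod (C t z x))"
      by (rule cmod_mmul_le)
    also have "\<dots> \<le> (\<Sum>z\<in>S. M * (K * sqrt (Phi t)))"
    proof (rule sum_mono)
      fix z assume z: "z \<in> S"
      have "0 \<le> M" using M t y z by (meson norm_ge_zero order.trans)
      then show "cmod (A t y z) * cmod (C t z x) \<le> M * (K * sqrt (Phi t))"
        using M K t y z x by (intro mult_mono) auto
    qed
    also have "\<dots> = real (card S) * M * K * sqrt (Phi t)" by simp
    finally show "cmod (mmul S (A t) (C t) y x) \<le> real (card S) * M * K * sqrt (Phi t)" .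
  qed
qed

lemma sml_mmul_r: "sml T A \<Longrightarrow> bnd T C \<Longrightarrow> sml T (\<lambda>t. mmul S (A t) (C t))"
proof -
  assume "sml T A" "bnd T C"
  then obtain M K where M: "\<forall>t\<in>{-T..T}. \<forall>y\<in>S. \<forall>x\<in>S. cmod (C t y x) \<le> M"
    and K: "\<forall>t\<in>{-T..T}. \<forall>y\<in>S. \<forall>x\<in>S. cmod (A t y x) \<le> K * sqrt (Phi t)"
    unfolding bnd_def sml_def by blast
  show ?thesis unfolding sml_def
  proof (intro exI[of _ "real (card S) * M * K"] ballI)
    fix t y x assume t: "t \<in> {-T..T}" and y: "y \<in> S" and x: "x \<in> S"
    have "cmod (mmul S (A t) (C t) y x) \<le> (\<Sum>z\<in>S. cmod (A t y z) * cmod (C t z x))"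
      by (rule cmod_mmul_le)
    also have "\<dots> \<le> (\<Sum>z\<in>S. M * (K * sqrt (Phi t)))"
    proof (rule sum_mono)
      fix z assume z: "z \<in> S"
      have "0 \<le> M" using M t x z by (meson norm_ge_zero order.trans)
      moreover have "0 \<le> K * sqrt (Phi t)" using K t y z by (meson norm_ge_zero order.trans)
      ultimately have "cmod (A t y z) * cmod (C t z x) \<le> (K * sqrt (Phi t)) * M"
        using M K t y z x by (intro mult_mono) auto
      then show "cmod (A t y z) * cmod (C t z x) \<le> M * (K * sqrt (Phi t))" by (simp add: mult.commute)
    qed
    also have "\<dots> = real (card S) * M * K * sqrt (Phi t)" by simp
    finally show "cmod (mmul S (A t) (C t) y x) \<le> real (card S) * M * K * sqrt (Phi t)" .
  qed
qed

lemma sml_comm_l: "bnd T A \<Longrightarrow> sml T C \<Longrightarrow> sml T (\<lambda>t. comm S (A t) (C t))"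
  unfolding comm_def by (intro sml_sub sml_mmul_l sml_mmul_r)
lemma sml_comm_r: "sml T A \<Longrightarrow> bnd T C \<Longrightarrow> sml T (\<lambda>t. comm S (A t) (C t))"
  unfolding comm_def by (intro sml_sub sml_mmul_l sml_mmul_r)

end


context dflow begin

lemma bnd_mono:
  assumes "bnd T X" "\<And>t y x. y \<in> S \<Longrightarrow> x \<in> S \<Longrightarrow> \<exists>y'\<in>S. \<exists>x'\<in>S. cmod (Y t y x) \<le> cmod (X t y' x')"
  shows "bnd T Y"
proof -
  obtain K where K: "\<forall>t\<in>{-T..T}. \<forall>y\<in>S. \<forall>x\<in>S. cmod (X t y x) \<le> K"
    using assms(1) unfolding bnd_def by blast
  show ?thesis unfolding bnd_def
  proof (intro exI[of _ K] ballI)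
    fix t y x assume "t \<in> {-T..T}" "y \<in> S" "x \<in> S"
    then show "cmod (Y t y x) \<le> K" using assms(2) K by (meson order.trans)
  qed
qed

lemma bnd_add: "bnd T X \<Longrightarrow> bnd T Y \<Longrightarrow> bnd T (\<lambda>t. madd (X t) (Y t))"
  unfolding bnd_def madd_def
proof (elim exE)
  fix K1 K2
  assume 1: "\<forall>t\<in>{-T..T}. \<forall>y\<in>S. \<forall>x\<in>S. cmod (X t y x) \<le> K1"
     and 2: "\<forall>t\<in>{-T..T}. \<forall>y\<in>S. \<forall>x\<in>S. cmod (Y t y x) \<le> K2"
  show "\<exists>K. \<forall>t\<in>{-T..T}. \<forall>y\<in>S. \<forall>x\<in>S. cmod (X t y x + Y t y x) \<le> K"
  proof (intro exI[of _ "K1 + K2"] ballI)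
    fix t y x assume "t \<in> {-T..T}" "y \<in> S" "x \<in> S"
    then show "cmod (X t y x + Y t y x) \<le> (K1 + K2)"
      using 1 2 norm_triangle_ineq[of "X t y x" "Y t y x"] by fastforce
  qed
qed

lemma bnd_smul: "bnd T X \<Longrightarrow> bnd T (\<lambda>t. smul c (X t))"
  unfolding bnd_def smul_def
proof (elim exE)
  fix K1
  assume 1: "\<forall>t\<in>{-T..T}. \<forall>y\<in>S. \<forall>x\<in>S. cmod (X t y x) \<le> K1"
  show "\<exists>K. \<forall>t\<in>{-T..T}. \<forall>y\<in>S. \<forall>x\<in>S. cmod (c * X t y x) \<le> K"
  proof (intro exI[of _ "cmod c * K1"] ballI)
    fix t y x assume "t \<in> {-T..T}" "y \<in> S" "x \<in> S"
    then show "cmod (c * X t y x) \<le> (cmod c * K1)"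
      using 1 by (auto simp: norm_mult intro: mult_left_mono)
  qed
qed

lemma bnd_sub: "bnd T X \<Longrightarrow> bnd T Y \<Longrightarrow> bnd T (\<lambda>t. msub (X t) (Y t))"
proof -
  assume "bnd T X" "bnd T Y"
  then have "bnd T (\<lambda>t. madd (X t) (smul (-1) (Y t)))" by (intro bnd_add bnd_smul)
  moreover have "(\<lambda>t. madd (X t) (smul (-1) (Y t))) = (\<lambda>t. msub (X t) (Y t))"
    by (simp add: madd_def msub_def smul_def fun_eq_iff)
  ultimately show ?thesis by simp
qed

lemma bnd_adj: "bnd T X \<Longrightarrow> bnd T (\<lambda>t. adj (X t))"
  by (erule bnd_mono) (auto simp: adj_def)
lemma bnd_dpart: "bnd T X \<Longrightarrow> bnd T (\<lambda>t. dpart (X t))"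
  by (erule bnd_mono) (auto simp: dpart_def)
lemma bnd_bpart: "bnd T X \<Longrightarrow> bnd T (\<lambda>t. bpart (X t))"
  by (erule bnd_mono) (auto simp: bpart_def)

lemma bnd_const: "bnd T (\<lambda>t. A)"
proof -
  have "\<forall>t\<in>{-T..T}. \<forall>y\<in>S. \<forall>x\<in>S. cmod (A y x) \<le> (\<Sum>y\<in>S. \<Sum>x\<in>S. cmod (A y x))"
  proof (intro ballI)
    fix t y x assume y: "y \<in> S" and x: "x \<in> S"
    have "cmod (A y x) \<le> (\<Sum>x\<in>S. cmod (A y x))" by (rule member_le_sum[OF x]) (auto simp: finS)
    also have "\<dots> \<le> (\<Sum>y\<in>S. \<Sum>x\<in>S. cmod (A y x))"
      by (rule member_le_sum[OF y]) (auto intro!: sum_nonneg simp: finS)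
    finally show "cmod (A y x) \<le> (\<Sum>y\<in>S. \<Sum>x\<in>S. cmod (A y x))" .
  qed
  then show ?thesis unfolding bnd_def by blast
qed

lemma bnd_mmul: "bnd T A \<Longrightarrow> bnd T C \<Longrightarrow> bnd T (\<lambda>t. mmul S (A t) (C t))"
proof -
  assume "bnd T A" "bnd T C"
  then obtain M K where M: "\<forall>t\<in>{-T..T}. \<forall>y\<in>S. \<forall>x\<in>S. cmod (A t y x) \<le> M"
    and K: "\<forall>t\<in>{-T..T}. \<forall>y\<in>S. \<forall>x\<in>S. cmod (C t y x) \<le> K"
    unfolding bnd_def by blast
  show ?thesis unfolding bnd_def
  proof (intro exI[of _ "real (card S) * M * K"] ballI)
    fix t y x assume t: "t \<in> {-T..T}" and y: "y \<in> S" and x: "x \<in> S"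
    have "cmod (mmul S (A t) (C t) y x) \<le> (\<Sum>z\<in>S. cmod (A t y z) * cmod (C t z x))"
      by (rule cmod_mmul_le)
    also have "\<dots> \<le> (\<Sum>z\<in>S. M * K)"
    proof (rule sum_mono)
      fix z assume z: "z \<in> S"
      have "0 \<le> M" using M t y z by (meson norm_ge_zero order.trans)
      then show "cmod (A t y z) * cmod (C t z x) \<le> M * K"
        using M K t y z x by (intro mult_mono) auto
    qed
    also have "\<dots> = real (card S) * M * K" by simp
    finally show "cmod (mmul S (A t) (C t) y x) \<le> real (card S) * M * K" .
  qed
qed

lemma bnd_comm: "bnd T A \<Longrightarrow> bnd T C \<Longrightarrow> bnd T (\<lambda>t. comm S (A t) (C t))"
  unfolding comm_def by (intro bnd_sub bnd_mmul)

lemma contD: "y \<in> S \<Longrightarrow> x \<in> S \<Longrightarrow> continuous (at t) (\<lambda>s. D s y x)"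
  using dD by (meson has_vector_derivative_continuous)

lemma bnd_D: "bnd T D"
proof (cases "T \<ge> 0")
  case False
  then have "{-T..T} = {}" by auto
  then show ?thesis unfolding bnd_def by auto
next
  case True
  let ?h = "\<lambda>t. \<Sum>y\<in>S. \<Sum>x\<in>S. cmod (D t y x)"
  have "continuous_on {-T..T} ?h"
    by (intro continuous_at_imp_continuous_on ballI continuous_sum continuous_norm contD) auto
  then obtain t0 where t0: "\<forall>t\<in>{-T..T}. ?h t \<le> ?h t0"
    using continuous_attains_sup[of "{-T..T}" ?h] True by auto
  have "\<forall>t\<in>{-T..T}. \<forall>y\<in>S. \<forall>x\<in>S. cmod (D t y x) \<le> ?h t0"
  proof (intro ballI)
    fix t y x assume t: "t \<in> {-T..T}" and y: "y \<in> S" and x: "x \<in> S"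
    have "cmod (D t y x) \<le> (\<Sum>x\<in>S. cmod (D t y x))" by (rule member_le_sum[OF x]) (auto simp: finS)
    also have "\<dots> \<le> ?h t"
      by (rule member_le_sum[OF y]) (auto intro!: sum_nonneg simp: finS)
    also have "\<dots> \<le> ?h t0" using t0 t by blast
    finally show "cmod (D t y x) \<le> ?h t0" .
  qed
  then show ?thesis unfolding bnd_def by blast
qed

lemma bnd_B: "bnd T B"
proof -
  have "bnd T (\<lambda>t. madd (msub (dpart (D t)) (adj (dpart (D t)))) (smul (\<i> * of_real \<beta>) (bpart (D t))))"
    by (intro bnd_add bnd_sub bnd_smul bnd_adj bnd_dpart bnd_bpart bnd_D)
  then show ?thesis unfolding B_def Bop_eq[symmetric] by simp
qed

lemma bnd_e1: "bnd T e1"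
  unfolding e1_def[abs_def] by (intro bnd_sub bnd_adj bnd_D)

lemma sml_Y: "sml T (\<lambda>t. comm S (B t) L)"
  unfolding YL by (intro sml_add sml_adj sml_smul sml_dpart sml_bpart sml_e)

lemma sml_d1: "sml T (\<lambda>t. msub (F t) (adj (F t)))"
  unfolding I1 by (intro sml_add sml_comm_r sml_comm_l sml_smul sml_bpart sml_e bnd_D bnd_B bnd_e1)
lemma sml_d2: "sml T (\<lambda>t. offtri (F t))"
  unfolding I2 by (intro sml_offtri sml_comm_l sml_add sml_lpart sml_e bnd_B)
lemma sml_d3: "sml T (\<lambda>t. comm S (F t) L)"
  unfolding I3 by (intro sml_add sml_comm_l sml_comm_r sml_Y sml_e bnd_B bnd_D)
lemma sml_d6: "sml T (\<lambda>t. madd (mmul S (F t) (D t)) (mmul S (D t) (F t)))"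
  unfolding I4 by (intro sml_add sml_comm_l sml_Y sml_e bnd_B)

end


lemma term_bound:
  assumes "cmod a \<le> sqrt P" "cmod b \<le> K * sqrt P" "P \<ge> 0"
  shows "\<bar>2 * Re (cnj a * b)\<bar> \<le> 2 * K * P"
proof -
  have "\<bar>Re (cnj a * b)\<bar> \<le> cmod (cnj a * b)" by (rule abs_Re_le_cmod)
  also have "\<dots> = cmod a * cmod b" by (simp add: norm_mult)
  also have "\<dots> \<le> sqrt P * (K * sqrt P)"
    using assms by (intro mult_mono) auto
  also have "\<dots> = K * P" using assms(3) by (simp add: algebra_simps)
  finally show ?thesis by simp
qed

context dflow begin

lemma e_le_sqrt:
  assumes "y \<in> S" "x \<in> S"
  shows "cmod (e1 t y x) \<le> sqrt (Phi t)" "cmod (e2 t y x) \<le> sqrt (Phi t)"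
        "cmod (e3 t y x) \<le> sqrt (Phi t)" "cmod (e6 t y x) \<le> sqrt (Phi t)"
  using e_le_Phi[OF assms] by (auto intro!: le_sqrt_of_sq)

lemma Phi'_bound: "\<exists>K. \<forall>t\<in>{-T..T}. \<bar>Phi' t\<bar> \<le> K * Phi t"
proof -
  obtain K1 where
    K1: "\<forall>t\<in>{-T..T}. \<forall>y\<in>S. \<forall>x\<in>S. cmod (msub (F t) (adj (F t)) y x) \<le> K1 * sqrt (Phi t)"
    using sml_d1[of T] unfolding sml_def by blast
  obtain K2 where
    K2: "\<forall>t\<in>{-T..T}. \<forall>y\<in>S. \<forall>x\<in>S. cmod (offtri (F t) y x) \<le> K2 * sqrt (Phi t)"
    using sml_d2[of T] unfolding sml_def by blast
  obtain K3 where
    K3: "\<forall>t\<in>{-T..T}. \<forall>y\<in>S. \<forall>x\<in>S. cmod (comm S (F t) L y x) \<le> K3 * sqrt (Phi t)"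
    using sml_d3[of T] unfolding sml_def by blast
  obtain K4 where
    K4: "\<forall>t\<in>{-T..T}. \<forall>y\<in>S. \<forall>x\<in>S. cmod (madd (mmul S (F t) (D t)) (mmul S (D t) (F t)) y x) \<le> K4 * sqrt (Phi t)"
    using sml_d6[of T] unfolding sml_def by blast
  let ?K = "real (card S) * real (card S) * (2 * K1 + 2 * K2 + 2 * K3 + 2 * K4)"
  show ?thesis
  proof (intro exI[of _ ?K] ballI)
    fix t assume t: "t \<in> {-T..T}"
    have "\<bar>Phi' t\<bar> \<le> (\<Sum>y\<in>S. \<Sum>x\<in>S. (2 * K1 + 2 * K2 + 2 * K3 + 2 * K4) * Phi t)"
      unfolding Phi'_def
    proof (rule order.trans[OF sum_abs], rule sum_mono, rule order.trans[OF sum_abs], rule sum_mono)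
      fix y x assume y: "y \<in> S" and x: "x \<in> S"
      note es = e_le_sqrt[OF y x, of t]
      have P: "Phi t \<ge> 0" by (rule Phi_nn)
      have a: "\<bar>2 * Re (cnj (e1 t y x) * msub (F t) (adj (F t)) y x)\<bar> \<le> 2 * K1 * Phi t"
        using K1 t y x es P by (intro term_bound) auto
      have b: "\<bar>2 * Re (cnj (e2 t y x) * offtri (F t) y x)\<bar> \<le> 2 * K2 * Phi t"
        using K2 t y x es P by (intro term_bound) auto
      have c: "\<bar>2 * Re (cnj (e3 t y x) * comm S (F t) L y x)\<bar> \<le> 2 * K3 * Phi t"
        using K3 t y x es P by (intro term_bound) auto
      have d: "\<bar>2 * Re (cnj (e6 t y x) * madd (mmul S (F t) (D t)) (mmul S (D t) (F t)) y x)\<bar> \<le> 2 * K4 * Phi t"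
        using K4 t y x es P by (intro term_bound) auto
      show "\<bar>2 * Re (cnj (e1 t y x) * msub (F t) (adj (F t)) y x) + 2 * Re (cnj (e2 t y x) * offtri (F t) y x)
         + 2 * Re (cnj (e3 t y x) * comm S (F t) L y x) + 2 * Re (cnj (e6 t y x) * madd (mmul S (F t) (D t)) (mmul S (D t) (F t)) y x)\<bar>
         \<le> (2 * K1 + 2 * K2 + 2 * K3 + 2 * K4) * Phi t"
        using a b c d by (simp add: algebra_simps)
    qed
    also have "\<dots> = ?K * Phi t" by simp
    finally show "\<bar>Phi' t\<bar> \<le> ?K * Phi t" .
  qed
qed

lemma mmul_cong_S:
  assumes "\<forall>y\<in>S. \<forall>x\<in>S. A y x = A' y x" "\<forall>y\<in>S. \<forall>x\<in>S. C y x = C' y x" "y \<in> S" "x \<in> S"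
  shows "mmul S A C y x = mmul S A' C' y x"
  unfolding mmul_def using assms by (auto intro!: sum.cong)

lemma Phi0: "Phi 0 = 0"
proof -
  have "\<forall>y\<in>S. \<forall>x\<in>S. e1 0 y x = 0 \<and> e2 0 y x = 0 \<and> e3 0 y x = 0 \<and> e6 0 y x = 0"
  proof (intro ballI)
    fix y x assume y: "y \<in> S" and x: "x \<in> S"
    have D0: "D 0 y x = Dirac0 S y x" "D 0 x y = Dirac0 S x y" using init y x by auto
    have h: "Dirac0 S y x = cnj (Dirac0 S x y)"
      using fun_cong[OF fun_cong[OF Dirac0_herm[of S]], of y x] by (simp add: adj_def)
    have 1: "e1 0 y x = 0" unfolding e1_def msub_def adj_def using D0 h by simp
    have 2: "e2 0 y x = 0" unfolding e2_def offtri_def D0 Dirac0_def madd_def adj_def d0_def by auto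
    have m: "mmul S (D 0) (D 0) y x = mmul S (Dirac0 S) (Dirac0 S) y x"
      by (rule mmul_cong_S) (use init y x in auto)
    have 6: "e6 0 y x = 0" unfolding e6_def msub_def m Laplacian_def by simp
    have m1: "mmul S (D 0) L y x = mmul S (Dirac0 S) L y x"
      by (rule mmul_cong_S) (use init y x in auto)
    have m2: "mmul S L (D 0) y x = mmul S L (Dirac0 S) y x"
      by (rule mmul_cong_S) (use init y x in auto)
    have 3: "e3 0 y x = 0" unfolding e3_def comm_def msub_def m1 m2 unfolding Laplacian_def mmul_assoc by simp
    show "e1 0 y x = 0 \<and> e2 0 y x = 0 \<and> e3 0 y x = 0 \<and> e6 0 y x = 0" using 1 2 3 6 by simp
  qed
  then show ?thesis unfolding Phi_def by simp
qed

lemma Phi_zero: "Phi t = 0"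
proof -
  obtain K where K: "\<forall>s\<in>{-\<bar>t\<bar>..\<bar>t\<bar>}. \<bar>Phi' s\<bar> \<le> K * Phi s" using Phi'_bound by blast
  show ?thesis
    by (rule gronwall0[of Phi Phi' "\<bar>t\<bar>" K]) (use dPhi Phi_nn Phi0 K in auto)
qed

lemma invariants:
  assumes "y \<in> S" "x \<in> S"
  shows "D t y x = cnj (D t x y)" "offtri (D t) y x = 0" "mmul S (D t) (D t) y x = L y x"
proof -
  have "(cmod (e1 t y x))\<^sup>2 \<le> 0" "(cmod (e2 t y x))\<^sup>2 \<le> 0" "(cmod (e6 t y x))\<^sup>2 \<le> 0"
    using e_le_Phi[OF assms, of t] Phi_zero[of t] by auto
  then have "e1 t y x = 0" "e2 t y x = 0" "e6 t y x = 0" by auto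
  then show "D t y x = cnj (D t x y)" "offtri (D t) y x = 0" "mmul S (D t) (D t) y x = L y x"
    unfolding e1_def e2_def e6_def msub_def adj_def by auto
qed

end


section \<open>Real analysis lemmas\<close>

lemma deriv_mono:
  fixes G G' :: "real \<Rightarrow> real"
  assumes "\<And>t. (G has_real_derivative G' t) (at t)" "\<And>t. G' t \<ge> 0"
  shows "mono G"
proof (rule monoI)
  fix a b :: real assume "a \<le> b"
  then show "G a \<le> G b"
    by (rule DERIV_nonneg_imp_nondecreasing) (use assms in blast)
qed

lemma mono_bdd_lim_top:
  fixes G :: "real \<Rightarrow> real"
  assumes "mono G" "\<And>t. \<bar>G t\<bar> \<le> M"
  shows "\<exists>l. (G \<longlongrightarrow> l) at_top"
proof -
  have "convergent (\<lambda>n. G (real n))"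
  proof (rule Bseq_monoseq_convergent)
    show "Bseq (\<lambda>n. G (real n))" using assms(2) by (intro BseqI') auto
    show "monoseq (\<lambda>n. G (real n))" unfolding monoseq_def
      using assms(1) by (auto simp: mono_def)
  qed
  then obtain l where "(\<lambda>n. G (real n)) \<longlonglongrightarrow> l" by (auto simp: convergent_def)
  then show ?thesis using tendsto_at_topI_sequentially_real[OF assms(1)] by blast
qed

lemma mono_bdd_lim_bot:
  fixes G :: "real \<Rightarrow> real"
  assumes "mono G" "\<And>t. \<bar>G t\<bar> \<le> M"
  shows "\<exists>l. (G \<longlongrightarrow> l) at_bot"
proof -
  have "mono (\<lambda>t. - G (- t))" using assms(1) by (auto simp: mono_def)
  moreover have "\<And>t. \<bar>- G (- t)\<bar> \<le> M" using assms(2) by simp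
  ultimately obtain l where "((\<lambda>t. - G (- t)) \<longlongrightarrow> l) at_top" using mono_bdd_lim_top by blast
  then have "((\<lambda>t. G (- t)) \<longlongrightarrow> - l) at_top" using tendsto_minus by fastforce
  then have "(G \<longlongrightarrow> - l) at_bot" by (simp add: filterlim_at_bot_mirror)
  then show ?thesis by blast
qed

lemma barbalat_top:
  fixes G N :: "real \<Rightarrow> real"
  assumes der: "\<And>t. (G has_real_derivative N t) (at t)" and nn: "\<And>t. N t \<ge> 0"
    and bd: "\<And>t. \<bar>G t\<bar> \<le> M" and lip: "\<And>s t. \<bar>N s - N t\<bar> \<le> C * \<bar>s - t\<bar>"
  shows "(N \<longlongrightarrow> 0) at_top"
proof -
  have mG: "mono G" by (rule deriv_mono[OF der nn])
  obtain l where l: "(G \<longlongrightarrow> l) at_top" using mono_bdd_lim_top[OF mG bd] by blast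
  define C' where "C' = max C 1"
  have C': "C' > 0" "\<And>s t. \<bar>N s - N t\<bar> \<le> C' * \<bar>s - t\<bar>"
    unfolding C'_def
  proof -
    show "max C 1 > 0" by simp
    fix s t :: real
    have "C * \<bar>s - t\<bar> \<le> max C 1 * \<bar>s - t\<bar>" by (intro mult_right_mono) auto
    then show "\<bar>N s - N t\<bar> \<le> max C 1 * \<bar>s - t\<bar>" using lip[of s t] by linarith
  qed
  show ?thesis
  proof (rule tendstoI)
    fix e :: real assume e: "e > 0"
    define d where "d = e / (2 * C')"
    have d: "d > 0" using e C' by (simp add: d_def)
    have "((\<lambda>t. G (t + d)) \<longlongrightarrow> l) at_top"
    proof (rule filterlim_compose[OF l])
      have "LIM x at_top. d + x :> at_top" by (rule filterlim_tendsto_add_at_top[OF tendsto_const filterlim_ident])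
      then show "LIM x at_top. x + d :> at_top" by (simp add: add.commute)
    qed
    then have "((\<lambda>t. G (t + d) - G t) \<longlongrightarrow> l - l) at_top" using l by (intro tendsto_diff)
    then have "eventually (\<lambda>t. dist (G (t + d) - G t) 0 < e * d / 2) at_top"
      using e d by (intro tendstoD) auto
    then show "eventually (\<lambda>t. dist (N t) 0 < e) at_top"
    proof (rule eventually_mono)
      fix t assume t: "dist (G (t + d) - G t) 0 < e * d / 2"
      show "dist (N t) 0 < e"
      proof (rule ccontr)
        assume "\<not> dist (N t) 0 < e"
        then have Nt: "N t \<ge> e" using nn[of t] by simp
        let ?h = "\<lambda>s. G s - (e / 2) * s"
        have "?h t \<le> ?h (t + d)"
        proof (rule DERIV_nonneg_imp_nondecreasing[of t "t + d" ?h])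
          show "t \<le> t + d" using d by simp
          fix x assume x: "t \<le> x" "x \<le> t + d"
          have "\<bar>N x - N t\<bar> \<le> C' * \<bar>x - t\<bar>" by (rule C')
          also have "\<dots> \<le> C' * d" using x C' by (intro mult_left_mono) auto
          also have "\<dots> = e / 2" using C' by (simp add: d_def)
          finally have "N x \<ge> e / 2" using Nt by linarith
          moreover have "DERIV ?h x :> N x - e / 2"
            by (auto intro!: derivative_eq_intros der)
          ultimately show "\<exists>y. DERIV ?h x :> y \<and> y \<ge> 0" by (intro exI[of _ "N x - e / 2"]) auto
        qed
        then have "G (t + d) - G t \<ge> e * d / 2" by (simp add: field_simps)
        then show False using t by (auto simp: dist_real_def abs_if split: if_splits)
      qed
    qed
  qed
qed

lemma barbalat_inf:
  fixes G N :: "real \<Rightarrow> real"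
  assumes der: "\<And>t. (G has_real_derivative N t) (at t)" and nn: "\<And>t. N t \<ge> 0"
    and bd: "\<And>t. \<bar>G t\<bar> \<le> M" and lip: "\<And>s t. \<bar>N s - N t\<bar> \<le> C * \<bar>s - t\<bar>"
  shows "(N \<longlongrightarrow> 0) at_infinity"
proof -
  have top: "(N \<longlongrightarrow> 0) at_top" by (rule barbalat_top[OF der nn bd lip])
  have "((\<lambda>t. N (- t)) \<longlongrightarrow> 0) at_top"
  proof (rule barbalat_top[of "\<lambda>t. - G (- t)" _ M C])
    fix t
    show "((\<lambda>t. - G (- t)) has_real_derivative N (- t)) (at t)"
      by (auto intro!: derivative_eq_intros DERIV_chain2[OF der])
    show "N (- t) \<ge> 0" by (rule nn)
    show "\<bar>- G (- t)\<bar> \<le> M" using bd by simp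
  next
    fix s t :: real
    show "\<bar>N (- s) - N (- t)\<bar> \<le> C * \<bar>s - t\<bar>" using lip[of "-s" "-t"] by (simp add: abs_minus_commute)
  qed
  then have bot: "(N \<longlongrightarrow> 0) at_bot" by (simp add: filterlim_at_bot_mirror)
  show ?thesis unfolding at_infinity_eq_at_top_bot using top bot by (rule filterlim_sup)
qed

lemma complex_conv:
  fixes h h' :: "real \<Rightarrow> complex" and G G' :: "real \<Rightarrow> real"
  assumes dh: "\<And>t. (h has_vector_derivative h' t) (at t)"
    and dG: "\<And>t. (G has_real_derivative G' t) (at t)"
    and le: "\<And>t. cmod (h' t) \<le> G' t"
    and bh: "\<And>t. cmod (h t) \<le> M1" and bG: "\<And>t. \<bar>G t\<bar> \<le> M2"
  shows "\<exists>l. (h \<longlongrightarrow> l) at_top" "\<exists>l. (h \<longlongrightarrow> l) at_bot"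
proof -
  have mono1: "mono (\<lambda>t. G t + c * Re (h t))" "mono (\<lambda>t. G t + c * Im (h t))"
    if c: "\<bar>c\<bar> = 1" for c :: real
  proof -
    show "mono (\<lambda>t. G t + c * Re (h t))"
    proof (rule deriv_mono)
      fix t
      show "((\<lambda>t. G t + c * Re (h t)) has_real_derivative G' t + c * Re (h' t)) (at t)"
        by (auto intro!: derivative_eq_intros dG dh)
      have "\<bar>c * Re (h' t)\<bar> \<le> cmod (h' t)" using c abs_Re_le_cmod[of "h' t"] by (simp add: abs_mult)
      then show "G' t + c * Re (h' t) \<ge> 0" using le[of t] by linarith
    qed
    show "mono (\<lambda>t. G t + c * Im (h t))"
    proof (rule deriv_mono)
      fix t
      show "((\<lambda>t. G t + c * Im (h t)) has_real_derivative G' t + c * Im (h' t)) (at t)"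
        by (auto intro!: derivative_eq_intros dG dh)
      have "\<bar>c * Im (h' t)\<bar> \<le> cmod (h' t)" using c abs_Im_le_cmod[of "h' t"] by (simp add: abs_mult)
      then show "G' t + c * Im (h' t) \<ge> 0" using le[of t] by linarith
    qed
  qed
  have bnd1: "\<bar>G t + c * Re (h t)\<bar> \<le> M2 + M1" "\<bar>G t + c * Im (h t)\<bar> \<le> M2 + M1"
    if c: "\<bar>c\<bar> = 1" for c :: real and t
  proof -
    have "\<bar>c * Re (h t)\<bar> \<le> M1" "\<bar>c * Im (h t)\<bar> \<le> M1"
      using c abs_Re_le_cmod[of "h t"] abs_Im_le_cmod[of "h t"] bh[of t] by (auto simp: abs_mult)
    then show "\<bar>G t + c * Re (h t)\<bar> \<le> M2 + M1" "\<bar>G t + c * Im (h t)\<bar> \<le> M2 + M1"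
      using bG[of t] by linarith+
  qed
  have key: "\<exists>l. (h \<longlongrightarrow> l) F"
    if lim: "\<And>f :: real \<Rightarrow> real. mono f \<Longrightarrow> (\<And>t. \<bar>f t\<bar> \<le> M2 + M1) \<Longrightarrow> \<exists>l. (f \<longlongrightarrow> l) F" for F
  proof -
    have m: "mono (\<lambda>t. G t + c * Re (h t))" "mono (\<lambda>t. G t + c * Im (h t))"
      "\<And>t. \<bar>G t + c * Re (h t)\<bar> \<le> M2 + M1" "\<And>t. \<bar>G t + c * Im (h t)\<bar> \<le> M2 + M1"
      if "c = 1 \<or> c = -1" for c :: real
      using mono1[of c] bnd1[of c] that by auto
    obtain a1 where a1: "((\<lambda>t. G t + 1 * Re (h t)) \<longlongrightarrow> a1) F" using lim[OF m(1,3)] by blast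
    obtain a2 where a2: "((\<lambda>t. G t + (-1) * Re (h t)) \<longlongrightarrow> a2) F" using lim[OF m(1,3)] by blast
    obtain a3 where a3: "((\<lambda>t. G t + 1 * Im (h t)) \<longlongrightarrow> a3) F" using lim[OF m(2,4)] by blast
    obtain a4 where a4: "((\<lambda>t. G t + (-1) * Im (h t)) \<longlongrightarrow> a4) F" using lim[OF m(2,4)] by blast
    have "((\<lambda>t. ((G t + 1 * Re (h t)) - (G t + (-1) * Re (h t))) / 2) \<longlongrightarrow> (a1 - a2) / 2) F"
      by (intro tendsto_divide tendsto_diff a1 a2 tendsto_const) simp
    moreover have "(\<lambda>t. ((G t + 1 * Re (h t)) - (G t + (-1) * Re (h t))) / 2) = (\<lambda>t. Re (h t))"
      by (auto simp: fun_eq_iff)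
    ultimately have r: "((\<lambda>t. Re (h t)) \<longlongrightarrow> (a1 - a2) / 2) F" by (metis (no_types, lifting))
    have "((\<lambda>t. ((G t + 1 * Im (h t)) - (G t + (-1) * Im (h t))) / 2) \<longlongrightarrow> (a3 - a4) / 2) F"
      by (intro tendsto_divide tendsto_diff a3 a4 tendsto_const) simp
    moreover have "(\<lambda>t. ((G t + 1 * Im (h t)) - (G t + (-1) * Im (h t))) / 2) = (\<lambda>t. Im (h t))"
      by (auto simp: fun_eq_iff)
    ultimately have i: "((\<lambda>t. Im (h t)) \<longlongrightarrow> (a3 - a4) / 2) F" by (metis (no_types, lifting))
    have "(h \<longlongrightarrow> Complex ((a1 - a2) / 2) ((a3 - a4) / 2)) F"
      unfolding tendsto_complex_iff using r i by simp
    then show ?thesis by blast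
  qed
  show "\<exists>l. (h \<longlongrightarrow> l) at_top" by (rule key) (rule mono_bdd_lim_top)
  show "\<exists>l. (h \<longlongrightarrow> l) at_bot" by (rule key) (rule mono_bdd_lim_bot)
qed



lemma cmod_mmul_bound:
  assumes "\<forall>y\<in>S. \<forall>z\<in>S. cmod (A y z) \<le> a" "\<forall>y\<in>S. \<forall>z\<in>S. cmod (C y z) \<le> c" "y \<in> S" "x \<in> S"
  shows "cmod (mmul S A C y x) \<le> real (card S) * a * c"
proof -
  have "cmod (mmul S A C y x) \<le> (\<Sum>z\<in>S. cmod (A y z) * cmod (C z x))" by (rule cmod_mmul_le)
  also have "\<dots> \<le> (\<Sum>z\<in>S. a * c)"
  proof (rule sum_mono)
    fix z assume z: "z \<in> S"
    have "0 \<le> a" using assms(1,3) z by (meson norm_ge_zero order.trans)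
    then show "cmod (A y z) * cmod (C z x) \<le> a * c" using assms z by (intro mult_mono) auto
  qed
  finally show ?thesis by simp
qed

lemma lipschitz_deriv:
  fixes f f' :: "real \<Rightarrow> real"
  assumes "\<And>t. (f has_real_derivative f' t) (at t)" "\<And>t. \<bar>f' t\<bar> \<le> C"
  shows "\<bar>f s - f t\<bar> \<le> C * \<bar>s - t\<bar>"
proof -
  have *: "\<bar>f b - f a\<bar> \<le> C * \<bar>b - a\<bar>" if ab: "a < b" for a b
  proof -
    obtain z where "f b - f a = (b - a) * f' z"
      using MVT2[OF ab, of f f'] assms(1) by blast
    then have "\<bar>f b - f a\<bar> = \<bar>b - a\<bar> * \<bar>f' z\<bar>" by (simp add: abs_mult)
    also have "\<dots> \<le> \<bar>b - a\<bar> * C" by (intro mult_left_mono assms(2)) auto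
    finally show ?thesis by (simp add: mult.commute)
  qed
  show ?thesis
  proof (cases s t rule: linorder_cases)
    case less then show ?thesis using *[of s t] by (simp add: abs_minus_commute)
  next
    case equal then show ?thesis by simp
  next
    case greater then show ?thesis using *[of t s] by simp
  qed
qed

context dflow begin

definition "dn t = (\<Sum>y\<in>S. \<Sum>z\<in>S. (cmod (dpart (D t) y z))\<^sup>2)"
definition "g t = (\<Sum>y\<in>S. real (card y) * Re (D t y y))"
definition "c0 = Re (\<Sum>y\<in>S. L y y)"

lemma F_block:
  assumes y: "y \<in> S" and x: "x \<in> S" and c: "card y = card x"
  shows "F t y x = 2 * (\<Sum>z\<in>S. dpart (D t) y z * cnj (dpart (D t) x z) - cnj (dpart (D t) z y) * dpart (D t) z x)"
  unfolding F_def comm_def msub_def mmul_def sum_subtractf[symmetric] sum_distrib_left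
proof (rule sum.cong[OF refl])
  fix z assume z: "z \<in> S"
  have h1: "D t z x = cnj (D t x z)" "D t y z = cnj (D t z y)" using invariants(1)[OF z x] invariants(1)[OF y z] by auto
  have o1: "offtri (D t) y z = 0" "offtri (D t) z x = 0" using invariants(2)[OF y z] invariants(2)[OF z x] by auto
  show "B t y z * D t z x - D t y z * B t z x =
    2 * (dpart (D t) y z * cnj (dpart (D t) x z) - cnj (dpart (D t) z y) * dpart (D t) z x)"
  proof -
    consider (a) "card y = card z + 1" | (b) "card z = card y + 1" | (c) "card y = card z"
      | (d) "card y \<noteq> card z" "card y \<noteq> card z + 1" "card z \<noteq> card y + 1" by linarith
    then show ?thesis
    proof cases
      case a
      then show ?thesis using c unfolding B_def Bop_def dpart_def bpart_def adj_def
        by (simp add: h1(1))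
    next
      case b
      then show ?thesis using c unfolding B_def Bop_def dpart_def bpart_def adj_def
        by (simp add: h1(2))
    next
      case c
      then show ?thesis using \<open>card y = card x\<close> unfolding B_def Bop_def dpart_def bpart_def adj_def
        by simp
    next
      case d
      then have "D t y z = 0" "D t z x = 0" using o1 c unfolding offtri_def by auto
      then show ?thesis using d c unfolding B_def Bop_def dpart_def bpart_def adj_def
        by simp
    qed
  qed
qed

lemma frob: "(\<Sum>y\<in>S. \<Sum>x\<in>S. (cmod (D t y x))\<^sup>2) = c0"
proof -
  have "(\<Sum>y\<in>S. \<Sum>x\<in>S. (cmod (D t y x))\<^sup>2) = (\<Sum>y\<in>S. \<Sum>x\<in>S. Re (D t y x * D t x y))"
  proof (intro sum.cong refl)
    fix y x assume "y \<in> S" "x \<in> S"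
    then have "D t x y = cnj (D t y x)" using invariants(1) by blast
    then show "(cmod (D t y x))\<^sup>2 = Re (D t y x * D t x y)" by (simp add: cmod_sq_Re)
  qed
  also have "\<dots> = Re (\<Sum>y\<in>S. mmul S (D t) (D t) y y)" by (simp add: mmul_def)
  also have "\<dots> = c0" unfolding c0_def using invariants(3) by (simp cong: sum.cong)
  finally show ?thesis .
qed

definition "R = sqrt c0"

lemma D_bound: "y \<in> S \<Longrightarrow> x \<in> S \<Longrightarrow> cmod (D t y x) \<le> R"
proof -
  assume y: "y \<in> S" and x: "x \<in> S"
  have "(cmod (D t y x))\<^sup>2 \<le> (\<Sum>x\<in>S. (cmod (D t y x))\<^sup>2)" by (rule member_le_sum[OF x]) (auto simp: finS)
  also have "\<dots> \<le> (\<Sum>y\<in>S. \<Sum>x\<in>S. (cmod (D t y x))\<^sup>2)"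
    by (rule member_le_sum[OF y]) (auto intro!: sum_nonneg simp: finS)
  finally show ?thesis unfolding R_def frob by (intro le_sqrt_of_sq) auto
qed

lemma R_nn: "y \<in> S \<Longrightarrow> 0 \<le> R"
  using D_bound[of y y 0] norm_ge_zero order.trans by blast

definition "CB = (2 + \<bar>\<beta>\<bar>) * R"
definition "CF = 2 * (real (card S) * CB * R)"

lemma B_bound: "y \<in> S \<Longrightarrow> x \<in> S \<Longrightarrow> cmod (B t y x) \<le> CB"
proof -
  assume y: "y \<in> S" and x: "x \<in> S"
  have a: "cmod (dpart (D t) y x) \<le> R" "cmod (cnj (dpart (D t) x y)) \<le> R" "cmod (bpart (D t) y x) \<le> R"
    using D_bound[OF y x] D_bound[OF x y] R_nn[OF y] by (auto simp: dpart_def bpart_def)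
  have "cmod (B t y x) \<le> cmod (dpart (D t) y x) + cmod (cnj (dpart (D t) x y)) + cmod (\<i> * complex_of_real \<beta> * bpart (D t) y x)"
    unfolding B_def Bop_def adj_def
    by (rule order.trans[OF norm_triangle_ineq add_mono[OF norm_triangle_ineq4 order_refl]])
  also have "\<dots> \<le> R + R + \<bar>\<beta>\<bar> * R" using a by (intro add_mono) (auto simp: norm_mult intro: mult_left_mono)
  finally show ?thesis by (simp add: CB_def algebra_simps)
qed

lemma F_bound: "y \<in> S \<Longrightarrow> x \<in> S \<Longrightarrow> cmod (F t y x) \<le> CF"
proof -
  assume y: "y \<in> S" and x: "x \<in> S"
  have "cmod (F t y x) \<le> cmod (mmul S (B t) (D t) y x) + cmod (mmul S (D t) (B t) y x)"
    unfolding F_def comm_def msub_def by (rule norm_triangle_ineq4)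
  also have "\<dots> \<le> real (card S) * CB * R + real (card S) * R * CB"
    using B_bound D_bound y x by (intro add_mono cmod_mmul_bound) auto
  finally show ?thesis by (simp add: CF_def algebra_simps)
qed

lemma dg: "(g has_real_derivative 2 * dn t) (at t)"
proof -
  have d: "(g has_real_derivative (\<Sum>y\<in>S. real (card y) * Re (F t y y))) (at t)"
    unfolding g_def[abs_def] using dD by (auto intro!: derivative_eq_intros simp: mult.commute)
  let ?d = "\<lambda>y z. (cmod (dpart (D t) y z))\<^sup>2"
  have re: "Re (F t y y) = 2 * (\<Sum>z\<in>S. ?d y z - ?d z y)" if y: "y \<in> S" for y
    using F_block[OF y y refl, of t] by (simp add: cmod_sq_Re mult.commute)
  have "(\<Sum>y\<in>S. real (card y) * Re (F t y y)) = 2 * (\<Sum>y\<in>S. \<Sum>z\<in>S. real (card y) * ?d y z - real (card y) * ?d z y)"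
    by (simp add: re sum_distrib_left right_diff_distrib) (simp add: algebra_simps)
  also have "\<dots> = 2 * ((\<Sum>y\<in>S. \<Sum>z\<in>S. real (card y) * ?d y z) - (\<Sum>y\<in>S. \<Sum>z\<in>S. real (card y) * ?d z y))"
    by (simp add: sum_subtractf)
  also have "(\<Sum>y\<in>S. \<Sum>z\<in>S. real (card y) * ?d z y) = (\<Sum>y\<in>S. \<Sum>z\<in>S. real (card z) * ?d y z)"
    by (rule sum.swap)
  also have "(\<Sum>y\<in>S. \<Sum>z\<in>S. real (card y) * ?d y z) - (\<Sum>y\<in>S. \<Sum>z\<in>S. real (card z) * ?d y z) = dn t"
    unfolding dn_def sum_subtractf[symmetric]
    by (intro sum.cong refl) (auto simp: dpart_def algebra_simps)
  finally show ?thesis using d by simp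
qed

definition "dn' t = (\<Sum>y\<in>S. \<Sum>z\<in>S. 2 * Re (cnj (dpart (D t) y z) * dpart (F t) y z))"

lemma ddn: "(dn has_real_derivative dn' t) (at t)"
proof -
  have "((\<lambda>s. dpart (D s) y z) has_vector_derivative dpart (F t) y z) (at t)" if "y \<in> S" "z \<in> S" for y z
    unfolding dpart_def using dD that by auto
  then show ?thesis unfolding dn_def[abs_def] dn'_def
    by (intro DERIV_sum vderiv_cmod_sq) auto
qed

lemma dn'_bound: "\<bar>dn' t\<bar> \<le> real (card S) * real (card S) * (2 * R * CF)"
proof -
  have "\<bar>dn' t\<bar> \<le> (\<Sum>y\<in>S. \<Sum>z\<in>S. 2 * R * CF)"
    unfolding dn'_def
  proof (rule order.trans[OF sum_abs], rule sum_mono, rule order.trans[OF sum_abs], rule sum_mono)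
    fix y z assume y: "y \<in> S" and z: "z \<in> S"
    have "\<bar>Re (cnj (dpart (D t) y z) * dpart (F t) y z)\<bar> \<le> cmod (dpart (D t) y z) * cmod (dpart (F t) y z)"
      using abs_Re_le_cmod by (metis complex_mod_cnj norm_mult)
    also have "\<dots> \<le> R * CF"
      using D_bound[OF y z] F_bound[OF y z] R_nn[OF y] order.trans[OF norm_ge_zero F_bound[OF y z, of t]]
      by (intro mult_mono) (auto simp: dpart_def)
    finally show "\<bar>2 * Re (cnj (dpart (D t) y z) * dpart (F t) y z)\<bar> \<le> 2 * R * CF" by simp
  qed
  then show ?thesis by simp
qed

lemma dn_nn: "dn t \<ge> 0"
  unfolding dn_def by (intro sum_nonneg) auto

lemma g_bound: "\<bar>g t\<bar> \<le> (\<Sum>y\<in>S. real (card y) * R)"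
  unfolding g_def
proof (rule order.trans[OF sum_abs], rule sum_mono)
  fix y assume y: "y \<in> S"
  have "\<bar>Re (D t y y)\<bar> \<le> R" using abs_Re_le_cmod D_bound[OF y y] by (rule order.trans)
  then show "\<bar>real (card y) * Re (D t y y)\<bar> \<le> real (card y) * R"
    by (simp add: abs_mult mult_left_mono)
qed

lemma dn_lim: "(dn \<longlongrightarrow> 0) at_infinity"
proof (rule barbalat_inf[of "\<lambda>t. g t / 2" _ "(\<Sum>y\<in>S. real (card y) * R)"])
  fix t
  show "((\<lambda>t. g t / 2) has_real_derivative dn t) (at t)"
    using dg[of t] by (auto intro!: derivative_eq_intros)
  show "dn t \<ge> 0" by (rule dn_nn)
  have "\<bar>g t\<bar> \<le> (\<Sum>y\<in>S. real (card y) * R)" by (rule g_bound)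
  moreover have "0 \<le> (\<Sum>y\<in>S. real (card y) * R)" using R_nn by (auto intro!: sum_nonneg)
  ultimately show "\<bar>g t / 2\<bar> \<le> (\<Sum>y\<in>S. real (card y) * R)" by simp
next
  fix s t
  show "\<bar>dn s - dn t\<bar> \<le> real (card S) * real (card S) * (2 * R * CF) * \<bar>s - t\<bar>"
    by (rule lipschitz_deriv[OF ddn dn'_bound])
qed

end


lemma cs_complex: "(cmod (\<Sum>x\<in>S. a x * f x))\<^sup>2 \<le> (\<Sum>x\<in>S. (cmod (a x))\<^sup>2) * (\<Sum>x\<in>S. (cmod (f x))\<^sup>2)"
proof -
  have "cmod (\<Sum>x\<in>S. a x * f x) \<le> (\<Sum>x\<in>S. cmod (a x) * cmod (f x))"
    by (rule order.trans[OF norm_sum]) (simp add: norm_mult)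
  then have "(cmod (\<Sum>x\<in>S. a x * f x))\<^sup>2 \<le> (\<Sum>x\<in>S. cmod (a x) * cmod (f x))\<^sup>2"
    by (intro power_mono) auto
  also have "\<dots> \<le> (\<Sum>x\<in>S. (cmod (a x))\<^sup>2) * (\<Sum>x\<in>S. (cmod (f x))\<^sup>2)"
    by (rule Cauchy_Schwarz_ineq_sum)
  finally show ?thesis .
qed

lemma opnorm_bounds:
  shows "0 \<le> opnorm S X" "opnorm S X \<le> sqrt (\<Sum>y\<in>S. \<Sum>x\<in>S. (cmod (X y x))\<^sup>2)"
proof -
  let ?M = "\<Sum>y\<in>S. \<Sum>x\<in>S. (cmod (X y x))\<^sup>2"
  let ?A = "{l2norm S (\<lambda>y. \<Sum>x\<in>S. X y x * f x) | f. l2norm S f \<le> 1}"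
  have ub: "v \<le> sqrt ?M" if v: "v \<in> ?A" for v
  proof -
    obtain f where f: "v = l2norm S (\<lambda>y. \<Sum>x\<in>S. X y x * f x)" "l2norm S f \<le> 1" using v by blast
    have nf: "(\<Sum>x\<in>S. (cmod (f x))\<^sup>2) \<le> 1" using f(2) unfolding l2norm_def
      by (metis real_sqrt_le_1_iff)
    have "(\<Sum>y\<in>S. (cmod (\<Sum>x\<in>S. X y x * f x))\<^sup>2) \<le> (\<Sum>y\<in>S. (\<Sum>x\<in>S. (cmod (X y x))\<^sup>2) * 1)"
    proof (rule sum_mono)
      fix y
      have "(cmod (\<Sum>x\<in>S. X y x * f x))\<^sup>2 \<le> (\<Sum>x\<in>S. (cmod (X y x))\<^sup>2) * (\<Sum>x\<in>S. (cmod (f x))\<^sup>2)"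
        by (rule cs_complex)
      also have "\<dots> \<le> (\<Sum>x\<in>S. (cmod (X y x))\<^sup>2) * 1"
        using nf by (intro mult_left_mono) (auto intro: sum_nonneg)
      finally show "(cmod (\<Sum>x\<in>S. X y x * f x))\<^sup>2 \<le> (\<Sum>x\<in>S. (cmod (X y x))\<^sup>2) * 1" .
    qed
    then show ?thesis unfolding f(1) l2norm_def by simp
  qed
  have z: "0 \<in> ?A"
  proof -
    have "l2norm S (\<lambda>y. \<Sum>x\<in>S. X y x * (\<lambda>_. 0) x) = 0" "l2norm S (\<lambda>_. 0) \<le> 1"
      by (simp_all add: l2norm_def)
    then show ?thesis by (intro CollectI exI[of _ "\<lambda>_. 0"]) simp
  qed
  have bdd: "bdd_above ?A" using ub by (intro bdd_aboveI) blast
  show "0 \<le> opnorm S X" unfolding opnorm_def by (rule cSup_upper[OF z bdd])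
  show "opnorm S X \<le> sqrt ?M" unfolding opnorm_def
    using z ub by (intro cSup_least) auto
qed

lemma herm_spectrum:
  assumes finS: "finite S" and herm: "\<forall>y\<in>S. \<forall>x\<in>S. A y x = cnj (A x y)"
    and c: "c \<in> op_spectrum S (mmul S A A)"
  shows "Im c = 0 \<and> 0 \<le> Re c \<and> Re c \<le> (\<Sum>y\<in>S. \<Sum>x\<in>S. (cmod (A y x))\<^sup>2)"
proof -
  obtain f where fne: "\<exists>x\<in>S. f x \<noteq> 0" and ev: "\<forall>y\<in>S. (\<Sum>x\<in>S. mmul S A A y x * f x) = c * f y"
    using c unfolding op_spectrum_def by blast
  define g where "g z = (\<Sum>x\<in>S. A z x * f x)" for z
  define nf where "nf = (\<Sum>y\<in>S. (cmod (f y))\<^sup>2)"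
  define ng where "ng = (\<Sum>z\<in>S. (cmod (g z))\<^sup>2)"
  define M where "M = (\<Sum>y\<in>S. \<Sum>x\<in>S. (cmod (A y x))\<^sup>2)"
  have nfpos: "nf > 0"
  proof -
    obtain x where x: "x \<in> S" "f x \<noteq> 0" using fne by blast
    have "(cmod (f x))\<^sup>2 \<le> nf" unfolding nf_def by (rule member_le_sum[OF x(1)]) (auto simp: finS)
    moreover have "(cmod (f x))\<^sup>2 > 0" using x by simp
    ultimately show ?thesis by linarith
  qed
  have step1: "(\<Sum>x\<in>S. mmul S A A y x * f x) = (\<Sum>z\<in>S. A y z * g z)" for y
    unfolding mmul_def g_def sum_distrib_left sum_distrib_right
    by (subst sum.swap) (simp add: mult.assoc)
  have cnjg: "(\<Sum>y\<in>S. cnj (f y) * A y z) = cnj (g z)" if z: "z \<in> S" for z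
    unfolding g_def cnj_sum
  proof (rule sum.cong[OF refl])
    fix y assume y: "y \<in> S"
    have "A y z = cnj (A z y)" using herm y z by blast
    then show "cnj (f y) * A y z = cnj (A z y * f y)" by (simp add: mult.commute)
  qed
  have "(\<Sum>y\<in>S. cnj (f y) * (c * f y)) = (\<Sum>y\<in>S. cnj (f y) * (\<Sum>z\<in>S. A y z * g z))"
    using ev step1 by (intro sum.cong) auto
  also have "\<dots> = (\<Sum>z\<in>S. (\<Sum>y\<in>S. cnj (f y) * A y z) * g z)"
    unfolding sum_distrib_left sum_distrib_right by (subst sum.swap) (simp add: mult.assoc)
  also have "\<dots> = (\<Sum>z\<in>S. cnj (g z) * g z)" using cnjg by (intro sum.cong) auto
  also have "\<dots> = of_real ng" unfolding ng_def of_real_sum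
    by (intro sum.cong refl) (simp only: complex_norm_square mult.commute)
  finally have A: "(\<Sum>y\<in>S. cnj (f y) * (c * f y)) = of_real ng" .
  have "(\<Sum>y\<in>S. cnj (f y) * (c * f y)) = c * of_real nf"
    unfolding nf_def of_real_sum sum_distrib_left
    by (intro sum.cong refl) (simp only: complex_norm_square mult.commute mult.left_commute)
  then have "c * of_real nf = of_real ng" using A by simp
  then have cval: "c = of_real (ng / nf)" using nfpos by (simp add: field_simps)
  have ng_nn: "ng \<ge> 0" unfolding ng_def by (auto intro: sum_nonneg)
  have "ng \<le> (\<Sum>z\<in>S. (\<Sum>x\<in>S. (cmod (A z x))\<^sup>2) * nf)"
    unfolding ng_def g_def nf_def by (intro sum_mono cs_complex)
  also have "\<dots> = M * nf" unfolding M_def by (simp add: sum_distrib_right)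
  finally have "ng / nf \<le> M" using nfpos by (simp add: divide_le_eq)
  then show ?thesis using cval ng_nn nfpos unfolding M_def by simp
qed



context dflow begin

lemma dsum_le:
  assumes y: "y \<in> S"
  shows "(\<Sum>z\<in>S. (cmod (dpart (D t) y z))\<^sup>2) \<le> dn t" "(\<Sum>z\<in>S. (cmod (dpart (D t) z y))\<^sup>2) \<le> dn t"
proof -
  show "(\<Sum>z\<in>S. (cmod (dpart (D t) y z))\<^sup>2) \<le> dn t" unfolding dn_def
    by (rule member_le_sum[OF y]) (auto intro!: sum_nonneg simp: finS)
  have "(\<Sum>z\<in>S. (cmod (dpart (D t) z y))\<^sup>2) \<le> (\<Sum>z\<in>S. \<Sum>w\<in>S. (cmod (dpart (D t) z w))\<^sup>2)"
    by (intro sum_mono member_le_sum[OF y]) (auto simp: finS)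
  then show "(\<Sum>z\<in>S. (cmod (dpart (D t) z y))\<^sup>2) \<le> dn t" unfolding dn_def .
qed

lemma ab_le: "(a::real) * b \<le> (a\<^sup>2 + b\<^sup>2) / 2"
  using sum_squares_ge_zero[of "a - b" 0] by (simp add: power2_eq_square algebra_simps)

lemma F_bound_dn:
  assumes y: "y \<in> S" and x: "x \<in> S" and c: "card y = card x"
  shows "cmod (F t y x) \<le> 4 * dn t"
proof -
  let ?d = "dpart (D t)"
  have "cmod (F t y x) \<le> 2 * (\<Sum>z\<in>S. cmod (?d y z * cnj (?d x z) - cnj (?d z y) * ?d z x))"
    unfolding F_block[OF y x c] by (simp add: norm_mult norm_sum)
  also have "\<dots> \<le> 2 * (\<Sum>z\<in>S. ((cmod (?d y z))\<^sup>2 + (cmod (?d x z))\<^sup>2) / 2 + ((cmod (?d z y))\<^sup>2 + (cmod (?d z x))\<^sup>2) / 2)"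
  proof (intro mult_left_mono sum_mono)
    fix z
    have "cmod (?d y z * cnj (?d x z) - cnj (?d z y) * ?d z x) \<le> cmod (?d y z) * cmod (?d x z) + cmod (?d z y) * cmod (?d z x)"
      by (rule order.trans[OF norm_triangle_ineq4]) (simp add: norm_mult)
    also have "\<dots> \<le> ((cmod (?d y z))\<^sup>2 + (cmod (?d x z))\<^sup>2) / 2 + ((cmod (?d z y))\<^sup>2 + (cmod (?d z x))\<^sup>2) / 2"
      by (intro add_mono ab_le)
    finally show "cmod (?d y z * cnj (?d x z) - cnj (?d z y) * ?d z x) \<le> \<dots>" .
  qed simp
  also have "\<dots> = (\<Sum>z\<in>S. (cmod (?d y z))\<^sup>2) + (\<Sum>z\<in>S. (cmod (?d x z))\<^sup>2) + (\<Sum>z\<in>S. (cmod (?d z y))\<^sup>2) + (\<Sum>z\<in>S. (cmod (?d z x))\<^sup>2)"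
    by (simp add: sum.distrib sum_divide_distrib[symmetric] algebra_simps) (simp add: field_simps)
  also have "\<dots> \<le> dn t + dn t + dn t + dn t"
    using dsum_le[OF y] dsum_le[OF x] by (intro add_mono) auto
  finally show ?thesis by simp
qed

lemma b_conv:
  assumes y: "y \<in> S" and x: "x \<in> S" and c: "card y = card x"
  shows "\<exists>l. ((\<lambda>t. D t y x) \<longlongrightarrow> l) at_top" "\<exists>l. ((\<lambda>t. D t y x) \<longlongrightarrow> l) at_bot"
proof -
  let ?M2 = "2 * (\<Sum>y\<in>S. real (card y) * R)"
  have dh: "\<And>t. ((\<lambda>t. D t y x) has_vector_derivative F t y x) (at t)" using dD y x by blast
  have dG: "\<And>t. ((\<lambda>t. 2 * g t) has_real_derivative 4 * dn t) (at t)"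
    using dg by (auto intro!: derivative_eq_intros)
  have le: "\<And>t. cmod (F t y x) \<le> 4 * dn t" by (rule F_bound_dn[OF y x c])
  have bh: "\<And>t. cmod (D t y x) \<le> R" by (rule D_bound[OF y x])
  have bG: "\<And>t. \<bar>2 * g t\<bar> \<le> ?M2" using g_bound by (simp add: abs_mult)
  show "\<exists>l. ((\<lambda>t. D t y x) \<longlongrightarrow> l) at_top" "\<exists>l. ((\<lambda>t. D t y x) \<longlongrightarrow> l) at_bot"
    using complex_conv[OF dh dG le bh bG] by auto
qed

lemma b_limit:
  assumes Fle: "Flt \<le> at_infinity" and Fnt: "Flt \<noteq> bot"
    and conv: "\<forall>y\<in>S. \<forall>x\<in>S. card y = card x \<longrightarrow> (\<exists>l. ((\<lambda>t. D t y x) \<longlongrightarrow> l) Flt)"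
  shows "\<exists>binf. ((\<lambda>t. opnorm S (msub (bpart (D t)) binf)) \<longlongrightarrow> 0) Flt
               \<and> (\<forall>y\<in>S. \<forall>x\<in>S. mmul S binf binf y x = L y x)"
proof -
  define binf where "binf y x = (if card y = card x then Lim Flt (\<lambda>t. D t y x) else 0)" for y x
  have dnF: "(dn \<longlongrightarrow> 0) Flt" using dn_lim Fle by (rule tendsto_mono[rotated])
  have sqF: "((\<lambda>t. sqrt (dn t)) \<longlongrightarrow> 0) Flt" using tendsto_real_sqrt[OF dnF] by simp
  have lim: "((\<lambda>t. D t y x) \<longlongrightarrow> binf y x) Flt" if y: "y \<in> S" and x: "x \<in> S" for y x
  proof (cases "card y = card x")
    case True
    then obtain l where l: "((\<lambda>t. D t y x) \<longlongrightarrow> l) Flt" using conv y x by blast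
    then have "Lim Flt (\<lambda>t. D t y x) = l" using Fnt by (intro tendsto_Lim) auto
    then show ?thesis using l True by (simp add: binf_def)
  next
    case False
    have z1: "((\<lambda>t. D t y' x') \<longlongrightarrow> 0) Flt" if y': "y' \<in> S" and x': "x' \<in> S" and c: "card y' = card x' + 1" for y' x'
    proof (rule Lim_null_comparison[OF _ sqF], rule always_eventually, rule allI)
      fix t
      have "(cmod (dpart (D t) y' x'))\<^sup>2 \<le> dn t" using dsum_le(1)[OF y', of t]
        by (rule order.trans[rotated]) (rule member_le_sum[OF x'], auto simp: finS)
      then show "norm (D t y' x') \<le> sqrt (dn t)" using c by (intro le_sqrt_of_sq) (auto simp: dpart_def)
    qed
    have "((\<lambda>t. D t y x) \<longlongrightarrow> 0) Flt"
    proof -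
      consider "card y = card x + 1" | "card x = card y + 1" | "card y \<noteq> card x" "card y \<noteq> card x + 1" "card x \<noteq> card y + 1"
        using False by linarith
      then show ?thesis
      proof cases
        case 1 then show ?thesis using z1[OF y x] by simp
      next
        case 2
        have "((\<lambda>t. cnj (D t x y)) \<longlongrightarrow> cnj 0) Flt" by (intro tendsto_cnj z1[OF x y 2])
        moreover have "D t y x = cnj (D t x y)" for t using invariants(1)[OF y x] .
        ultimately show ?thesis by simp
      next
        case 3
        have "D t y x = 0" for t using invariants(2)[OF y x, of t] 3 by (simp add: offtri_def)
        then show ?thesis by simp
      qed
    qed
    then show ?thesis using False by (simp add: binf_def)
  qed
  have b1: "((\<lambda>t. opnorm S (msub (bpart (D t)) binf)) \<longlongrightarrow> 0) Flt"
  proof (rule tendsto_sandwich[of "\<lambda>t. 0" _ _ "\<lambda>t. sqrt (\<Sum>y\<in>S. \<Sum>x\<in>S. (cmod (msub (bpart (D t)) binf y x))\<^sup>2)"])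
    show "eventually (\<lambda>t. 0 \<le> opnorm S (msub (bpart (D t)) binf)) Flt" by (simp add: opnorm_bounds)
    show "eventually (\<lambda>t. opnorm S (msub (bpart (D t)) binf) \<le> sqrt (\<Sum>y\<in>S. \<Sum>x\<in>S. (cmod (msub (bpart (D t)) binf y x))\<^sup>2)) Flt"
      by (simp add: opnorm_bounds)
    show "((\<lambda>t. 0) \<longlongrightarrow> (0::real)) Flt" by simp
    have "((\<lambda>t. msub (bpart (D t)) binf y x) \<longlongrightarrow> 0) Flt" if y: "y \<in> S" and x: "x \<in> S" for y x
    proof (cases "card y = card x")
      case True
      have "((\<lambda>t. D t y x - binf y x) \<longlongrightarrow> binf y x - binf y x) Flt" by (intro tendsto_diff lim y x tendsto_const)
      then show ?thesis using True by (simp add: msub_def bpart_def)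
    next
      case False then show ?thesis by (simp add: msub_def bpart_def binf_def)
    qed
    then have "((\<lambda>t. sqrt (\<Sum>y\<in>S. \<Sum>x\<in>S. (cmod (msub (bpart (D t)) binf y x))\<^sup>2)) \<longlongrightarrow>
               sqrt (\<Sum>y\<in>S. \<Sum>x\<in>S. (cmod (0::complex))\<^sup>2)) Flt"
      by (intro tendsto_real_sqrt tendsto_sum tendsto_power tendsto_norm) auto
    then show "((\<lambda>t. sqrt (\<Sum>y\<in>S. \<Sum>x\<in>S. (cmod (msub (bpart (D t)) binf y x))\<^sup>2)) \<longlongrightarrow> 0) Flt" by simp
  qed
  have b2: "mmul S binf binf y x = L y x" if y: "y \<in> S" and x: "x \<in> S" for y x
  proof -
    have "((\<lambda>t. mmul S (D t) (D t) y x) \<longlongrightarrow> mmul S binf binf y x) Flt"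
      unfolding mmul_def using y x by (intro tendsto_sum tendsto_mult lim) auto
    moreover have "mmul S (D t) (D t) y x = L y x" for t by (rule invariants(3)[OF y x])
    ultimately have "((\<lambda>t. L y x) \<longlongrightarrow> mmul S binf binf y x) Flt" by simp
    then show ?thesis using Fnt tendsto_const_iff by (metis trivial_limit_def)
  qed
  show ?thesis using b1 b2 by blast
qed

end


theorem mainTheorem11:
  fixes V :: "'v::linorder set" and E :: "'v \<Rightarrow> 'v \<Rightarrow> bool"
    and \<beta> :: real and D :: "real \<Rightarrow> 'v op"
  assumes finV: "finite V"
    and symE: "\<And>u w. E u w \<Longrightarrow> E w u"
    and irrE: "\<And>u. \<not> E u u"
    and init: "\<forall>y\<in>simplices V E. \<forall>x\<in>simplices V E. D 0 y x = Dirac0 (simplices V E) y x"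
    and ode: "\<forall>t. \<forall>y\<in>simplices V E. \<forall>x\<in>simplices V E.
       ((\<lambda>s. D s y x) has_vector_derivative
          msub (mmul (simplices V E) (Bop \<beta> (D t)) (D t))
               (mmul (simplices V E) (D t) (Bop \<beta> (D t))) y x) (at t)"
  shows "(\<exists>a :: real \<Rightarrow> real. (\<forall>t. a t \<ge> 0) \<and> (a \<longlongrightarrow> 0) at_infinity \<and>
            (\<forall>t. \<forall>c\<in>op_spectrum (simplices V E)
                  (mmul (simplices V E) (madd (dpart (D t)) (adj (dpart (D t))))
                                        (madd (dpart (D t)) (adj (dpart (D t))))).
               Im c = 0 \<and> 0 \<le> Re c \<and> Re c \<le> a t))
      \<and> ((\<lambda>t. opnorm (simplices V E) (dpart (D t))) \<longlongrightarrow> 0) at_infinity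
      \<and> (\<exists>binf. ((\<lambda>t. opnorm (simplices V E) (msub (bpart (D t)) binf)) \<longlongrightarrow> 0) at_top
               \<and> (\<forall>y\<in>simplices V E. \<forall>x\<in>simplices V E.
                    mmul (simplices V E) binf binf y x = Laplacian (simplices V E) y x))
      \<and> (\<exists>binf. ((\<lambda>t. opnorm (simplices V E) (msub (bpart (D t)) binf)) \<longlongrightarrow> 0) at_bot
               \<and> (\<forall>y\<in>simplices V E. \<forall>x\<in>simplices V E.
                    mmul (simplices V E) binf binf y x = Laplacian (simplices V E) y x))"
proof -
  define S where "S = simplices V E"
  interpret dflow S \<beta> D
  proof
    show "finite S" unfolding S_def by (rule finite_simplices[OF finV])
    show "\<And>y x. card y \<noteq> card x \<Longrightarrow> Laplacian S y x = 0" by (rule Lap_block[OF finV S_def])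
    show "\<forall>y\<in>S. \<forall>x\<in>S. D 0 y x = Dirac0 S y x" using init unfolding S_def .
    show "\<forall>t. \<forall>y\<in>S. \<forall>x\<in>S. ((\<lambda>s. D s y x) has_vector_derivative
          msub (mmul S (Bop \<beta> (D t)) (D t)) (mmul S (D t) (Bop \<beta> (D t))) y x) (at t)"
      using ode unfolding S_def .
  qed
  define A where "A t = madd (dpart (D t)) (adj (dpart (D t)))" for t
  define a where "a t = (\<Sum>y\<in>S. \<Sum>x\<in>S. (cmod (A t y x))\<^sup>2)" for t
  have a_nn: "\<forall>t. a t \<ge> 0" unfolding a_def by (auto intro!: sum_nonneg)
  have a_le: "a t \<le> 4 * dn t" for t
  proof -
    let ?d = "\<lambda>y x. (cmod (dpart (D t) y x))\<^sup>2"
    have "a t \<le> (\<Sum>y\<in>S. \<Sum>x\<in>S. 2 * ?d y x + 2 * ?d x y)"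
      unfolding a_def
    proof (intro sum_mono)
      fix y x
      have "cmod (A t y x) \<le> cmod (dpart (D t) y x) + cmod (dpart (D t) x y)"
        unfolding A_def madd_def adj_def using norm_triangle_ineq by (metis complex_mod_cnj)
      then have "(cmod (A t y x))\<^sup>2 \<le> (cmod (dpart (D t) y x) + cmod (dpart (D t) x y))\<^sup>2"
        by (intro power_mono) auto
      also have "\<dots> \<le> 2 * ?d y x + 2 * ?d x y"
        using ab_le[of "cmod (dpart (D t) y x)" "cmod (dpart (D t) x y)"]
        by (simp add: power2_sum)
      finally show "(cmod (A t y x))\<^sup>2 \<le> 2 * ?d y x + 2 * ?d x y" .
    qed
    also have "\<dots> = 2 * (\<Sum>y\<in>S. \<Sum>x\<in>S. ?d y x) + 2 * (\<Sum>y\<in>S. \<Sum>x\<in>S. ?d x y)"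
      by (simp add: sum.distrib sum_distrib_left)
    also have "(\<Sum>y\<in>S. \<Sum>x\<in>S. ?d x y) = (\<Sum>y\<in>S. \<Sum>x\<in>S. ?d y x)" by (rule sum.swap)
    finally show ?thesis unfolding dn_def by simp
  qed
  have a_lim: "(a \<longlongrightarrow> 0) at_infinity"
  proof (rule tendsto_sandwich[of "\<lambda>t. 0" _ _ "\<lambda>t. 4 * dn t"])
    show "eventually (\<lambda>t. 0 \<le> a t) at_infinity" using a_nn by simp
    show "eventually (\<lambda>t. a t \<le> 4 * dn t) at_infinity" using a_le by simp
    show "((\<lambda>t. 0) \<longlongrightarrow> (0::real)) at_infinity" by simp
    show "((\<lambda>t. 4 * dn t) \<longlongrightarrow> 0) at_infinity" using tendsto_mult_right_zero[OF dn_lim, of 4] by simp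
  qed
  have spec: "\<forall>t. \<forall>c\<in>op_spectrum S (mmul S (A t) (A t)). Im c = 0 \<and> 0 \<le> Re c \<and> Re c \<le> a t"
  proof (intro allI ballI)
    fix t c assume c: "c \<in> op_spectrum S (mmul S (A t) (A t))"
    have herm: "\<forall>y\<in>S. \<forall>x\<in>S. A t y x = cnj (A t x y)"
      unfolding A_def madd_def adj_def by simp
    show "Im c = 0 \<and> 0 \<le> Re c \<and> Re c \<le> a t"
      using herm_spectrum[OF finS herm c] unfolding a_def .
  qed
  have dlim: "((\<lambda>t. opnorm S (dpart (D t))) \<longlongrightarrow> 0) at_infinity"
  proof (rule tendsto_sandwich[of "\<lambda>t. 0" _ _ "\<lambda>t. sqrt (dn t)"])
    show "eventually (\<lambda>t. 0 \<le> opnorm S (dpart (D t))) at_infinity" by (simp add: opnorm_bounds)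
    show "eventually (\<lambda>t. opnorm S (dpart (D t)) \<le> sqrt (dn t)) at_infinity"
      unfolding dn_def by (simp add: opnorm_bounds)
    show "((\<lambda>t. 0) \<longlongrightarrow> (0::real)) at_infinity" by simp
    show "((\<lambda>t. sqrt (dn t)) \<longlongrightarrow> 0) at_infinity" using tendsto_real_sqrt[OF dn_lim] by simp
  qed
  have top: "\<exists>binf. ((\<lambda>t. opnorm S (msub (bpart (D t)) binf)) \<longlongrightarrow> 0) at_top
               \<and> (\<forall>y\<in>S. \<forall>x\<in>S. mmul S binf binf y x = L y x)"
    by (rule b_limit[OF at_top_le_at_infinity]) (use b_conv in auto)
  have bot: "\<exists>binf. ((\<lambda>t. opnorm S (msub (bpart (D t)) binf)) \<longlongrightarrow> 0) at_bot
               \<and> (\<forall>y\<in>S. \<forall>x\<in>S. mmul S binf binf y x = L y x)"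
    by (rule b_limit[OF at_bot_le_at_infinity]) (use b_conv in auto)
  show ?thesis
    using a_nn a_lim spec dlim top bot unfolding S_def[symmetric] A_def by blast
qed


end
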